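(* Let $E$ be an arbitrary graph satisfying Condition (L), $X\subseteq{\rm Reg}(E)$ and $Y={\rm Reg}(E)\setminus X$. Let $A$ be a ring and $\pi:C_K^X(E)\to A$ a ring homomorphism such that $\pi(u)\ne0$ for every $u\in E^0$ and $\pi\big(v-\sum_{e\in s^{-1}(v)}ee^*\big)\ne 0$ for every $v\in Y$. Then $\pi$ is injective.
   Context: Let $K$ be a field and $E=(E^0,E^1,r,s)$ a directed graph (no countability or finiteness assumptions). A vertex $v$ is regular if $s^{-1}(v)$ is finite and nonempty; ${\rm Reg}(E)$ is the set of regular vertices. For $X\subseteq{\rm Reg}(E)$, the relative Cohn path algebra $C_K^X(E)$ is the free $K$-algebra generated by $E^0\cup E^1\cup\{e^*:e\in E^1\}$ subject to: $vw=\delta_{v,w}v$; $s(e)e=er(e)=e$ and $r(e)e^*=e^*s(e)=e^*$; $e^*f=\delta_{e,f}r(e)$; $v=\sum_{e\in s^{-1}(v)}ee^*$ for every $v\in X$. A cycle is a path $e_1\cdots e_n$ ($n\ge1$) with $r(e_n)=s(e_1)$ and $s(e_i)\ne s(e_j)$ for $i\ne j$. An exit of $e_1\cdots e_n$ is an edge $e$ with $s(e)=s(e_i)$ for some $i$ and $e\ne e_i$. $E$ satisfies Condition (L) if every cycle in $E$ has an exit. *)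

theory Defs
  imports Main
begin

definition graph :: "'v set \<Rightarrow> 'e set \<Rightarrow> ('e \<Rightarrow> 'v) \<Rightarrow> ('e \<Rightarrow> 'v) \<Rightarrow> bool" where
  "graph E0 E1 r s \<longleftrightarrow> r ` E1 \<subseteq> E0 \<and> s ` E1 \<subseteq> E0"

definition regular_vertex :: "'e set \<Rightarrow> ('e \<Rightarrow> 'v) \<Rightarrow> 'v \<Rightarrow> bool" where
  "regular_vertex E1 s v \<longleftrightarrow> finite {e \<in> E1. s e = v} \<and> {e \<in> E1. s e = v} \<noteq> {}"

definition Reg :: "'v set \<Rightarrow> 'e set \<Rightarrow> ('e \<Rightarrow> 'v) \<Rightarrow> 'v set" where
  "Reg E0 E1 s = {v \<in> E0. regular_vertex E1 s v}"

definition is_cycle :: "'e set \<Rightarrow> ('e \<Rightarrow> 'v) \<Rightarrow> ('e \<Rightarrow> 'v) \<Rightarrow> 'e list \<Rightarrow> bool" where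
  "is_cycle E1 r s p \<longleftrightarrow> p \<noteq> [] \<and> set p \<subseteq> E1
     \<and> (\<forall>i. Suc i < length p \<longrightarrow> r (p ! i) = s (p ! Suc i))
     \<and> r (last p) = s (hd p)
     \<and> distinct (map s p)"

definition is_exit :: "'e set \<Rightarrow> ('e \<Rightarrow> 'v) \<Rightarrow> 'e list \<Rightarrow> 'e \<Rightarrow> bool" where
  "is_exit E1 s p e \<longleftrightarrow> e \<in> E1 \<and> (\<exists>i < length p. s e = s (p ! i) \<and> e \<noteq> p ! i)"

definition condition_L :: "'e set \<Rightarrow> ('e \<Rightarrow> 'v) \<Rightarrow> ('e \<Rightarrow> 'v) \<Rightarrow> bool" where
  "condition_L E1 r s \<longleftrightarrow> (\<forall>p. is_cycle E1 r s p \<longrightarrow> (\<exists>e. is_exit E1 s p e))"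

section \<open>The free (non-unital) K-algebra on E0 \<union> E1 \<union> E1*\<close>

datatype ('v, 'e) gen = Vx 'v | Ed 'e | Gh 'e

definition gens :: "'v set \<Rightarrow> 'e set \<Rightarrow> ('v, 'e) gen set" where
  "gens E0 E1 = Vx ` E0 \<union> Ed ` E1 \<union> Gh ` E1"

definition FA :: "'v set \<Rightarrow> 'e set \<Rightarrow> (('v, 'e) gen list \<Rightarrow> 'k::field) set" where
  "FA E0 E1 = {f. finite {w. f w \<noteq> 0}
                  \<and> (\<forall>w. f w \<noteq> 0 \<longrightarrow> w \<noteq> [] \<and> set w \<subseteq> gens E0 E1)}"

definition fadd :: "('g list \<Rightarrow> 'k::field) \<Rightarrow> ('g list \<Rightarrow> 'k) \<Rightarrow> 'g list \<Rightarrow> 'k" where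
  "fadd f g = (\<lambda>w. f w + g w)"

definition fminus :: "('g list \<Rightarrow> 'k::field) \<Rightarrow> ('g list \<Rightarrow> 'k) \<Rightarrow> 'g list \<Rightarrow> 'k" where
  "fminus f g = (\<lambda>w. f w - g w)"

definition fsmul :: "'k::field \<Rightarrow> ('g list \<Rightarrow> 'k) \<Rightarrow> 'g list \<Rightarrow> 'k" where
  "fsmul c f = (\<lambda>w. c * f w)"

definition fzero :: "'g list \<Rightarrow> 'k::field" where
  "fzero = (\<lambda>w. 0)"

text \<open>Concatenation product (words are nonempty, so splits are into two nonempty parts).\<close>
definition fmul :: "('g list \<Rightarrow> 'k::field) \<Rightarrow> ('g list \<Rightarrow> 'k) \<Rightarrow> 'g list \<Rightarrow> 'k" where
  "fmul f g = (\<lambda>w. \<Sum>i\<in>{1..<length w}. f (take i w) * g (drop i w))"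

definition fgen :: "'g \<Rightarrow> 'g list \<Rightarrow> 'k::field" where
  "fgen x = (\<lambda>w. if w = [x] then 1 else 0)"

definition gap_elem :: "'e set \<Rightarrow> ('e \<Rightarrow> 'v) \<Rightarrow> 'v \<Rightarrow> ('v, 'e) gen list \<Rightarrow> 'k::field" where
  "gap_elem E1 s v = fminus (fgen (Vx v))
      (\<lambda>w. \<Sum>e\<in>{e \<in> E1. s e = v}. fmul (fgen (Ed e)) (fgen (Gh e)) w)"

definition cohn_rels :: "'v set \<Rightarrow> 'e set \<Rightarrow> ('e \<Rightarrow> 'v) \<Rightarrow> ('e \<Rightarrow> 'v) \<Rightarrow> 'v set
     \<Rightarrow> (('v, 'e) gen list \<Rightarrow> 'k::field) set" where
  "cohn_rels E0 E1 r s X =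
     {fminus (fmul (fgen (Vx v)) (fgen (Vx w))) (if v = w then fgen (Vx v) else fzero)
        | v w. v \<in> E0 \<and> w \<in> E0}
   \<union> {fminus (fmul (fgen (Vx (s e))) (fgen (Ed e))) (fgen (Ed e)) | e. e \<in> E1}
   \<union> {fminus (fmul (fgen (Ed e)) (fgen (Vx (r e)))) (fgen (Ed e)) | e. e \<in> E1}
   \<union> {fminus (fmul (fgen (Vx (r e))) (fgen (Gh e))) (fgen (Gh e)) | e. e \<in> E1}
   \<union> {fminus (fmul (fgen (Gh e)) (fgen (Vx (s e)))) (fgen (Gh e)) | e. e \<in> E1}
   \<union> {fminus (fmul (fgen (Gh e)) (fgen (Ed f))) (if e = f then fgen (Vx (r e)) else fzero)
        | e f. e \<in> E1 \<and> f \<in> E1}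
   \<union> {gap_elem E1 s v | v. v \<in> X}"

inductive_set cohn_ideal :: "'v set \<Rightarrow> 'e set \<Rightarrow> ('e \<Rightarrow> 'v) \<Rightarrow> ('e \<Rightarrow> 'v) \<Rightarrow> 'v set
     \<Rightarrow> (('v, 'e) gen list \<Rightarrow> 'k::field) set"
  for E0 E1 r s X where
  rel: "a \<in> cohn_rels E0 E1 r s X \<Longrightarrow> a \<in> cohn_ideal E0 E1 r s X"
| zero: "fzero \<in> cohn_ideal E0 E1 r s X"
| add: "a \<in> cohn_ideal E0 E1 r s X \<Longrightarrow> b \<in> cohn_ideal E0 E1 r s X
          \<Longrightarrow> fadd a b \<in> cohn_ideal E0 E1 r s X"
| smul: "a \<in> cohn_ideal E0 E1 r s X \<Longrightarrow> fsmul c a \<in> cohn_ideal E0 E1 r s X"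
| lmul: "a \<in> cohn_ideal E0 E1 r s X \<Longrightarrow> x \<in> FA E0 E1 \<Longrightarrow> fmul x a \<in> cohn_ideal E0 E1 r s X"
| rmul: "a \<in> cohn_ideal E0 E1 r s X \<Longrightarrow> x \<in> FA E0 E1 \<Longrightarrow> fmul a x \<in> cohn_ideal E0 E1 r s X"

definition cls :: "'v set \<Rightarrow> 'e set \<Rightarrow> ('e \<Rightarrow> 'v) \<Rightarrow> ('e \<Rightarrow> 'v) \<Rightarrow> 'v set
     \<Rightarrow> (('v, 'e) gen list \<Rightarrow> 'k::field) \<Rightarrow> (('v, 'e) gen list \<Rightarrow> 'k) set" where
  "cls E0 E1 r s X x = {y \<in> FA E0 E1. fminus y x \<in> cohn_ideal E0 E1 r s X}"

definition CohnAlg :: "'v set \<Rightarrow> 'e set \<Rightarrow> ('e \<Rightarrow> 'v) \<Rightarrow> ('e \<Rightarrow> 'v) \<Rightarrow> 'v set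
     \<Rightarrow> (('v, 'e) gen list \<Rightarrow> 'k::field) set set" where
  "CohnAlg E0 E1 r s X = cls E0 E1 r s X ` FA E0 E1"

definition cohn_ring_hom :: "'v set \<Rightarrow> 'e set \<Rightarrow> ('e \<Rightarrow> 'v) \<Rightarrow> ('e \<Rightarrow> 'v) \<Rightarrow> 'v set
     \<Rightarrow> ((('v, 'e) gen list \<Rightarrow> 'k::field) set \<Rightarrow> 'a::ring) \<Rightarrow> bool" where
  "cohn_ring_hom E0 E1 r s X \<pi> \<longleftrightarrow>
     (\<forall>x \<in> FA E0 E1. \<forall>y \<in> FA E0 E1.
        \<pi> (cls E0 E1 r s X (fadd x y)) = \<pi> (cls E0 E1 r s X x) + \<pi> (cls E0 E1 r s X y)
      \<and> \<pi> (cls E0 E1 r s X (fmul x y)) = \<pi> (cls E0 E1 r s X x) * \<pi> (cls E0 E1 r s X y))"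

end

theory Submission
  imports Defs
begin


definition dl :: "'g list \<Rightarrow> 'g list \<Rightarrow> 'k::field" where
  "dl u = (\<lambda>w. if w = u then 1 else 0)"

lemma fgen_dl: "fgen x = dl [x]" by (simp add: fgen_def dl_def)

lemma fmul_dl:
  assumes "u \<noteq> []" "v \<noteq> []"
  shows "fmul (dl u) (dl v) = (dl (u@v) :: 'g list \<Rightarrow> 'k::field)"
proof (rule ext)
  fix z :: "'g list"
  have "fmul (dl u) (dl v) z = (\<Sum>i\<in>{1..<length z}. (if i = length u \<and> z = u@v then 1 else 0::'k))"
    unfolding fmul_def dl_def
    apply (rule sum.cong, simp)
    apply (auto simp: append_eq_conv_conj)
    done
  also have "\<dots> = dl (u@v) z"
    using assms by (auto simp: dl_def Suc_le_eq)
  finally show "fmul (dl u) (dl v) z = (dl (u@v) z :: 'k)" .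
qed

lemma sum_restrict_nat:
  assumes "(i::nat) \<le> n"
  shows "(\<Sum>j\<in>{1..<i}. F j) = (\<Sum>j\<in>{..<n}. if 1 \<le> j \<and> j < i then F j else (0::'a::comm_monoid_add))"
proof -
  have "{1..<i} = {j\<in>{..<n}. 1 \<le> j \<and> j < i}" using assms by (auto intro: less_le_trans)
  moreover have "(\<Sum>j\<in>{..<n}. if 1 \<le> j \<and> j < i then F j else 0) = (\<Sum>j\<in>{j\<in>{..<n}. 1 \<le> j \<and> j < i}. F j)"
    by (rule sum.inter_filter[symmetric]) simp
  ultimately show ?thesis by simp
qed

lemma fmul_assoc: "fmul (fmul f g) h = fmul f (fmul g h)"
proof (rule ext)
  fix w :: "'a list"
  define n where "n = length w"
  define F where "F i j = f (take j w) * g (take (i-j) (drop j w)) * h (drop i w)" for i j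
  have "fmul (fmul f g) h w = (\<Sum>i\<in>{1..<n}. \<Sum>j\<in>{1..<i}. F i j)"
    unfolding fmul_def n_def F_def
    by (rule sum.cong) (auto simp: sum_distrib_right min_def take_drop intro!: sum.cong)
  also have "\<dots> = (\<Sum>i\<in>{1..<n}. \<Sum>j\<in>{..<n}. if 1 \<le> j \<and> j < i then F i j else 0)"
    apply (rule sum.cong, simp) apply (rule sum_restrict_nat) by simp
  also have "\<dots> = (\<Sum>i\<in>{..<n}. if 1 \<le> i \<and> i < n then (\<Sum>j\<in>{..<n}. if 1 \<le> j \<and> j < i then F i j else 0) else 0)"
    by (rule sum_restrict_nat) simp
  also have "\<dots> = (\<Sum>i\<in>{..<n}. \<Sum>j\<in>{..<n}. if 1 \<le> j \<and> j < i \<and> i < n then F i j else 0)"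
    by (rule sum.cong) auto
  also have "\<dots> = (\<Sum>j\<in>{..<n}. \<Sum>i\<in>{..<n}. if 1 \<le> j \<and> j < i \<and> i < n then F i j else 0)"
    by (rule sum.swap)
  also have "\<dots> = (\<Sum>j\<in>{1..<n}. \<Sum>i\<in>{j+1..<n}. F i j)"
  proof -
    have "(\<Sum>j\<in>{1..<n}. \<Sum>i\<in>{j+1..<n}. F i j) = (\<Sum>j\<in>{..<n}. if 1 \<le> j \<and> j < n then (\<Sum>i\<in>{j+1..<n}. F i j) else 0)"
      by (rule sum_restrict_nat) simp
    also have "\<dots> = (\<Sum>j\<in>{..<n}. \<Sum>i\<in>{..<n}. if 1 \<le> j \<and> j < i \<and> i < n then F i j else 0)"
    proof (rule sum.cong, simp)
      fix j assume "j \<in> {..<n}"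
      have "{j+1..<n} = {i\<in>{..<n}. j < i}" by auto
      moreover have "(\<Sum>i\<in>{..<n}. if j<i then F i j else 0) = (\<Sum>i\<in>{i\<in>{..<n}. j < i}. F i j)"
        by (rule sum.inter_filter[symmetric]) simp
      ultimately have "(\<Sum>i\<in>{j+1..<n}. F i j) = (\<Sum>i\<in>{..<n}. if j < i then F i j else 0)"
        by simp
      thus "(if 1 \<le> j \<and> j < n then (\<Sum>i\<in>{j+1..<n}. F i j) else 0) = (\<Sum>i\<in>{..<n}. if 1 \<le> j \<and> j < i \<and> i < n then F i j else 0)"
        by (auto intro!: sum.cong)
    qed
    finally show ?thesis by simp
  qed
  also have "\<dots> = fmul f (fmul g h) w"
    unfolding fmul_def n_def
  proof (rule sum.cong, simp)
    fix j assume j: "j \<in> {1..<length w}"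
    have "(\<Sum>i\<in>{j+1..<length w}. F i j) = (\<Sum>k\<in>{1..<length w - j}. F (k+j) j)"
      by (rule sum.reindex_bij_witness[where i="\<lambda>k. k+j" and j="\<lambda>i. i-j"]) auto
    also have "\<dots> = f (take j w) * (\<Sum>k\<in>{1..<length (drop j w)}. g (take k (drop j w)) * h (drop k (drop j w)))"
      unfolding F_def by (simp add: sum_distrib_left mult.assoc add.commute)
    finally show "(\<Sum>i\<in>{j+1..<length w}. F i j) = f (take j w) * (\<Sum>k\<in>{1..<length (drop j w)}. g (take k (drop j w)) * h (drop k (drop j w)))" .
  qed
  finally show "fmul (fmul f g) h w = fmul f (fmul g h) w" .
qed


definition fsum :: "'i set \<Rightarrow> ('i \<Rightarrow> 'g list \<Rightarrow> 'k::field) \<Rightarrow> 'g list \<Rightarrow> 'k" where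
  "fsum A f = (\<lambda>w. \<Sum>i\<in>A. f i w)"

lemmas fdefs = fadd_def fminus_def fsmul_def fzero_def fsum_def

lemma fmul_fadd_left: "fmul (fadd a b) c = fadd (fmul a c) (fmul b c)"
  by (simp add: fmul_def fdefs sum.distrib algebra_simps)
lemma fmul_fadd_right: "fmul c (fadd a b) = fadd (fmul c a) (fmul c b)"
  by (simp add: fmul_def fdefs sum.distrib algebra_simps)
lemma fmul_fminus_left: "fmul (fminus a b) c = fminus (fmul a c) (fmul b c)"
  by (simp add: fmul_def fdefs sum_subtractf algebra_simps)
lemma fmul_fminus_right: "fmul c (fminus a b) = fminus (fmul c a) (fmul c b)"
  by (simp add: fmul_def fdefs sum_subtractf algebra_simps)
lemma fmul_fsmul_left: "fmul (fsmul k a) c = fsmul k (fmul a c)"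
  by (simp add: fmul_def fdefs sum_distrib_left algebra_simps)
lemma fmul_fsmul_right: "fmul c (fsmul k a) = fsmul k (fmul c a)"
  by (simp add: fmul_def fdefs sum_distrib_left algebra_simps)
lemma fmul_fzero_left: "fmul fzero c = fzero"
  by (simp add: fmul_def fdefs)
lemma fmul_fzero_right: "fmul c fzero = fzero"
  by (simp add: fmul_def fdefs)
lemma fmul_fsum_left: "fmul (fsum A f) c = fsum A (\<lambda>i. fmul (f i) c)"
  by (simp add: fmul_def fdefs sum_distrib_right sum.swap[of _ A])
lemma fmul_fsum_right: "fmul c (fsum A f) = fsum A (\<lambda>i. fmul c (f i))"
  by (simp add: fmul_def fdefs sum_distrib_left sum.swap[of _ A])

lemma fsum_empty[simp]: "fsum {} f = fzero" by (simp add: fdefs)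
lemma fsum_insert: "finite A \<Longrightarrow> i \<notin> A \<Longrightarrow> fsum (insert i A) f = fadd (f i) (fsum A f)"
  by (simp add: fdefs)
lemma fsum_cong: "(\<And>i. i \<in> A \<Longrightarrow> f i = g i) \<Longrightarrow> fsum A f = fsum A g"
  by (simp add: fdefs)

lemma FA_I:
  assumes "finite {w. f w \<noteq> 0}" "\<And>w. f w \<noteq> 0 \<Longrightarrow> w \<noteq> [] \<and> set w \<subseteq> gens E0 E1"
  shows "f \<in> FA E0 E1"
  using assms unfolding FA_def by auto

lemma FA_D1: "f \<in> FA E0 E1 \<Longrightarrow> finite {w. f w \<noteq> 0}" unfolding FA_def by auto
lemma FA_D2: "f \<in> FA E0 E1 \<Longrightarrow> f w \<noteq> 0 \<Longrightarrow> w \<noteq> [] \<and> set w \<subseteq> gens E0 E1" unfolding FA_def by auto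

lemma FA_fzero: "fzero \<in> FA E0 E1" by (rule FA_I) (auto simp: fzero_def)

lemma FA_fadd: assumes "a \<in> FA E0 E1" "b \<in> FA E0 E1" shows "fadd a b \<in> FA E0 E1"
proof (rule FA_I)
  have "{w. fadd a b w \<noteq> 0} \<subseteq> {w. a w \<noteq> 0} \<union> {w. b w \<noteq> 0}" by (auto simp: fadd_def)
  thus "finite {w. fadd a b w \<noteq> 0}" by (rule finite_subset) (simp add: FA_D1[OF assms(1)] FA_D1[OF assms(2)])
  fix w assume "fadd a b w \<noteq> 0"
  hence "a w \<noteq> 0 \<or> b w \<noteq> 0" by (auto simp: fadd_def)
  thus "w \<noteq> [] \<and> set w \<subseteq> gens E0 E1" using FA_D2[OF assms(1)] FA_D2[OF assms(2)] by blast
qed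

lemma FA_fsmul: assumes "a \<in> FA E0 E1" shows "fsmul k a \<in> FA E0 E1"
proof (rule FA_I)
  have "{w. fsmul k a w \<noteq> 0} \<subseteq> {w. a w \<noteq> 0}" by (auto simp: fsmul_def)
  thus "finite {w. fsmul k a w \<noteq> 0}" by (rule finite_subset) (simp add: FA_D1[OF assms(1)])
  fix w assume "fsmul k a w \<noteq> 0"
  hence "a w \<noteq> 0" by (auto simp: fsmul_def)
  thus "w \<noteq> [] \<and> set w \<subseteq> gens E0 E1" using FA_D2[OF assms(1)] by blast
qed

lemma fminus_eq: "fminus a b = fadd a (fsmul (-1) b)" by (simp add: fdefs)

lemma FA_fminus: "a \<in> FA E0 E1 \<Longrightarrow> b \<in> FA E0 E1 \<Longrightarrow> fminus a b \<in> FA E0 E1"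
  by (simp add: fminus_eq FA_fadd FA_fsmul)

lemma FA_fsum: "finite A \<Longrightarrow> (\<And>i. i \<in> A \<Longrightarrow> f i \<in> FA E0 E1) \<Longrightarrow> fsum A f \<in> FA E0 E1"
  by (induction A rule: finite_induct) (auto simp: fsum_insert FA_fzero FA_fadd)

lemma FA_dl: "w \<noteq> [] \<Longrightarrow> set w \<subseteq> gens E0 E1 \<Longrightarrow> dl w \<in> FA E0 E1"
  by (rule FA_I) (auto simp: dl_def split: if_splits)

lemma FA_fmul: assumes "a \<in> FA E0 E1" "b \<in> FA E0 E1" shows "fmul a b \<in> FA E0 E1"
proof (rule FA_I)
  let ?A = "{w. a w \<noteq> 0}" and ?B = "{w. b w \<noteq> 0}"
  have key: "\<exists>i. a (take i w) \<noteq> 0 \<and> b (drop i w) \<noteq> 0" if "fmul a b w \<noteq> 0" for w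
  proof (rule ccontr)
    assume "\<not> ?thesis"
    hence "fmul a b w = 0" unfolding fmul_def by (intro sum.neutral) auto
    thus False using that by simp
  qed
  have "{w. fmul a b w \<noteq> 0} \<subseteq> (\<lambda>(x,y). x@y) ` (?A \<times> ?B)"
  proof
    fix w assume "w \<in> {w. fmul a b w \<noteq> 0}"
    then obtain i where "a (take i w) \<noteq> 0" "b (drop i w) \<noteq> 0" using key by blast
    thus "w \<in> (\<lambda>(x,y). x@y) ` (?A \<times> ?B)" by (intro image_eqI[of _ _ "(take i w, drop i w)"]) auto
  qed
  thus "finite {w. fmul a b w \<noteq> 0}" by (rule finite_subset) (simp add: FA_D1[OF assms(1)] FA_D1[OF assms(2)])
  fix w assume "fmul a b w \<noteq> 0"
  then obtain i where "a (take i w) \<noteq> 0" "b (drop i w) \<noteq> 0" using key by blast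
  hence "take i w \<noteq> [] \<and> set (take i w) \<subseteq> gens E0 E1" "drop i w \<noteq> [] \<and> set (drop i w) \<subseteq> gens E0 E1"
    using FA_D2[OF assms(1)] FA_D2[OF assms(2)] by blast+
  moreover have "w = take i w @ drop i w" by simp
  ultimately show "w \<noteq> [] \<and> set w \<subseteq> gens E0 E1" by (metis Un_subset_iff append_is_Nil_conv set_append)
qed

lemma FA_decomp:
  assumes "f \<in> FA E0 E1"
  shows "f = fsum {w. f w \<noteq> 0} (\<lambda>w. fsmul (f w) (dl w))"
proof (rule ext)
  fix z
  have fin: "finite {w. f w \<noteq> 0}" using FA_D1[OF assms] .
  show "f z = fsum {w. f w \<noteq> 0} (\<lambda>w. fsmul (f w) (dl w)) z"
    unfolding fsum_def fsmul_def dl_def using fin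
    by (cases "f z = 0") (auto simp: sum.delta' if_distrib cong: if_cong)
qed



definition V :: "'v \<Rightarrow> ('v,'e) gen list \<Rightarrow> 'k::field" where "V v = dl [Vx v]"
definition Ee :: "'e \<Rightarrow> ('v,'e) gen list \<Rightarrow> 'k::field" where "Ee e = dl [Ed e]"
definition Gg :: "'e \<Rightarrow> ('v,'e) gen list \<Rightarrow> 'k::field" where "Gg e = dl [Gh e]"

locale cg =
  fixes E0 :: "'v set" and E1 :: "'e set" and r s :: "'e \<Rightarrow> 'v" and X :: "'v set"
  assumes gr: "graph E0 E1 r s" and XR: "X \<subseteq> Reg E0 E1 s"
begin

lemma r_E0: "e \<in> E1 \<Longrightarrow> r e \<in> E0" using gr by (auto simp: graph_def)
lemma s_E0: "e \<in> E1 \<Longrightarrow> s e \<in> E0" using gr by (auto simp: graph_def)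

definition eqv :: "(('v,'e) gen list \<Rightarrow> 'k::field) \<Rightarrow> (('v,'e) gen list \<Rightarrow> 'k) \<Rightarrow> bool" (infix "\<approx>" 50) where
  "a \<approx> b \<longleftrightarrow> fminus a b \<in> cohn_ideal E0 E1 r s X"

lemma I_add: "a \<in> cohn_ideal E0 E1 r s X \<Longrightarrow> b \<in> cohn_ideal E0 E1 r s X \<Longrightarrow> fadd a b \<in> cohn_ideal E0 E1 r s X"
  by (rule cohn_ideal.add)

lemma eqv_refl[simp]: "a \<approx> a"
proof -
  have "fminus a a = fzero" by (simp add: fdefs)
  thus ?thesis by (simp add: eqv_def cohn_ideal.zero)
qed

lemma eqv_sym: "a \<approx> b \<Longrightarrow> b \<approx> a"
proof -
  assume "a \<approx> b"
  hence "fsmul (-1) (fminus a b) \<in> cohn_ideal E0 E1 r s X" unfolding eqv_def by (rule cohn_ideal.smul)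
  moreover have "fsmul (-1) (fminus a b) = fminus b a" by (simp add: fdefs)
  ultimately show ?thesis by (simp add: eqv_def)
qed

lemma eqv_trans[trans]: "a \<approx> b \<Longrightarrow> b \<approx> c \<Longrightarrow> a \<approx> c"
proof -
  assume "a \<approx> b" "b \<approx> c"
  hence "fadd (fminus a b) (fminus b c) \<in> cohn_ideal E0 E1 r s X" unfolding eqv_def by (rule cohn_ideal.add)
  moreover have "fadd (fminus a b) (fminus b c) = fminus a c" by (simp add: fdefs)
  ultimately show ?thesis by (simp add: eqv_def)
qed

lemma eq_eqv_trans[trans]: "a = b \<Longrightarrow> b \<approx> c \<Longrightarrow> a \<approx> c" by simp
lemma eqv_eq_trans[trans]: "a \<approx> b \<Longrightarrow> b = c \<Longrightarrow> a \<approx> c" by simp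

lemma eqv_add: "a \<approx> b \<Longrightarrow> c \<approx> d \<Longrightarrow> fadd a c \<approx> fadd b d"
proof -
  assume "a \<approx> b" "c \<approx> d"
  hence "fadd (fminus a b) (fminus c d) \<in> cohn_ideal E0 E1 r s X" unfolding eqv_def by (rule cohn_ideal.add)
  moreover have "fadd (fminus a b) (fminus c d) = fminus (fadd a c) (fadd b d)" by (simp add: fdefs algebra_simps)
  ultimately show ?thesis by (simp add: eqv_def)
qed

lemma eqv_smul: "a \<approx> b \<Longrightarrow> fsmul k a \<approx> fsmul k b"
proof -
  assume "a \<approx> b"
  hence "fsmul k (fminus a b) \<in> cohn_ideal E0 E1 r s X" unfolding eqv_def by (rule cohn_ideal.smul)
  moreover have "fsmul k (fminus a b) = fminus (fsmul k a) (fsmul k b)" by (simp add: fdefs algebra_simps)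
  ultimately show ?thesis by (simp add: eqv_def)
qed

lemma eqv_minus: "a \<approx> b \<Longrightarrow> c \<approx> d \<Longrightarrow> fminus a c \<approx> fminus b d"
  unfolding fminus_eq by (intro eqv_add eqv_smul)

lemma eqv_fsum: "finite A \<Longrightarrow> (\<And>i. i \<in> A \<Longrightarrow> f i \<approx> g i) \<Longrightarrow> fsum A f \<approx> fsum A g"
  by (induction A rule: finite_induct) (auto simp: fsum_insert intro: eqv_add)

lemma eqv_lmul: "x \<in> FA E0 E1 \<Longrightarrow> a \<approx> b \<Longrightarrow> fmul x a \<approx> fmul x b"
  unfolding eqv_def fmul_fminus_right[symmetric] by (rule cohn_ideal.lmul)

lemma eqv_rmul: "x \<in> FA E0 E1 \<Longrightarrow> a \<approx> b \<Longrightarrow> fmul a x \<approx> fmul b x"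
  unfolding eqv_def fmul_fminus_left[symmetric] by (rule cohn_ideal.rmul)

lemma eqv_mul: "a \<approx> b \<Longrightarrow> c \<approx> d \<Longrightarrow> b \<in> FA E0 E1 \<Longrightarrow> c \<in> FA E0 E1 \<Longrightarrow> fmul a c \<approx> fmul b d"
  by (meson eqv_lmul eqv_rmul eqv_trans)

lemma eqv_zero_fsum: "finite A \<Longrightarrow> (\<And>i. i \<in> A \<Longrightarrow> f i \<approx> fzero) \<Longrightarrow> fsum A f \<approx> fzero"
proof -
  assume "finite A" "\<And>i. i \<in> A \<Longrightarrow> f i \<approx> fzero"
  hence "fsum A f \<approx> fsum A (\<lambda>_. fzero)" by (rule eqv_fsum)
  thus ?thesis by (simp add: fsum_def fzero_def)
qed

lemma fmul_zero_eqv: "a \<approx> fzero \<Longrightarrow> x \<in> FA E0 E1 \<Longrightarrow> fmul a x \<approx> fzero"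
  using eqv_rmul[of x a fzero] by (simp add: fmul_fzero_left)
lemma fmul_zero_eqv': "a \<approx> fzero \<Longrightarrow> x \<in> FA E0 E1 \<Longrightarrow> fmul x a \<approx> fzero"
  using eqv_lmul[of x a fzero] by (simp add: fmul_fzero_right)

lemma gens_Vx: "v \<in> E0 \<Longrightarrow> Vx v \<in> gens E0 E1" by (simp add: gens_def)
lemma gens_Ed: "e \<in> E1 \<Longrightarrow> Ed e \<in> gens E0 E1" by (simp add: gens_def)
lemma gens_Gh: "e \<in> E1 \<Longrightarrow> Gh e \<in> gens E0 E1" by (simp add: gens_def)

lemma FA_V: "v \<in> E0 \<Longrightarrow> V v \<in> FA E0 E1" by (simp add: V_def FA_dl gens_Vx)
lemma FA_Ee: "e \<in> E1 \<Longrightarrow> Ee e \<in> FA E0 E1" by (simp add: Ee_def FA_dl gens_Ed)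
lemma FA_Gg: "e \<in> E1 \<Longrightarrow> Gg e \<in> FA E0 E1" by (simp add: Gg_def FA_dl gens_Gh)

lemma relI: "a \<in> cohn_rels E0 E1 r s X \<Longrightarrow> a \<in> cohn_ideal E0 E1 r s X" by (rule cohn_ideal.rel)

lemma R1: assumes "v \<in> E0" "w \<in> E0" shows "fmul (V v) (V w) \<approx> (if v = w then V v else fzero)"
proof -
  have "fminus (fmul (fgen (Vx v)) (fgen (Vx w))) (if v = w then fgen (Vx v) else fzero) \<in> cohn_rels E0 E1 r s X"
    unfolding cohn_rels_def using assms by blast
  thus ?thesis unfolding eqv_def V_def fgen_dl by (rule relI)
qed

lemma R2: assumes "e \<in> E1" shows "fmul (V (s e)) (Ee e) \<approx> Ee e"
proof -
  have "fminus (fmul (fgen (Vx (s e))) (fgen (Ed e))) (fgen (Ed e)) \<in> cohn_rels E0 E1 r s X"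
    unfolding cohn_rels_def using assms by blast
  thus ?thesis unfolding eqv_def V_def Ee_def fgen_dl by (rule relI)
qed

lemma R3: assumes "e \<in> E1" shows "fmul (Ee e) (V (r e)) \<approx> Ee e"
proof -
  have "fminus (fmul (fgen (Ed e)) (fgen (Vx (r e)))) (fgen (Ed e)) \<in> cohn_rels E0 E1 r s X"
    unfolding cohn_rels_def using assms by blast
  thus ?thesis unfolding eqv_def V_def Ee_def fgen_dl by (rule relI)
qed

lemma R4: assumes "e \<in> E1" shows "fmul (V (r e)) (Gg e) \<approx> Gg e"
proof -
  have "fminus (fmul (fgen (Vx (r e))) (fgen (Gh e))) (fgen (Gh e)) \<in> cohn_rels E0 E1 r s X"
    unfolding cohn_rels_def using assms by blast
  thus ?thesis unfolding eqv_def V_def Gg_def fgen_dl by (rule relI)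
qed

lemma R5: assumes "e \<in> E1" shows "fmul (Gg e) (V (s e)) \<approx> Gg e"
proof -
  have "fminus (fmul (fgen (Gh e)) (fgen (Vx (s e)))) (fgen (Gh e)) \<in> cohn_rels E0 E1 r s X"
    unfolding cohn_rels_def using assms by blast
  thus ?thesis unfolding eqv_def V_def Gg_def fgen_dl by (rule relI)
qed

lemma R6: assumes "e \<in> E1" "f \<in> E1" shows "fmul (Gg e) (Ee f) \<approx> (if e = f then V (r e) else fzero)"
proof -
  have "fminus (fmul (fgen (Gh e)) (fgen (Ed f))) (if e = f then fgen (Vx (r e)) else fzero) \<in> cohn_rels E0 E1 r s X"
    unfolding cohn_rels_def using assms by blast
  thus ?thesis unfolding eqv_def V_def Gg_def Ee_def fgen_dl by (rule relI)
qed

lemma gap_eq: "gap_elem E1 s v = fminus (V v) (fsum {e \<in> E1. s e = v} (\<lambda>e. fmul (Ee e) (Gg e)))"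
  by (simp add: gap_elem_def V_def Ee_def Gg_def fgen_dl fsum_def)

lemma R7: assumes "v \<in> X" shows "V v \<approx> fsum {e \<in> E1. s e = v} (\<lambda>e. fmul (Ee e) (Gg e))"
proof -
  have "gap_elem E1 s v \<in> cohn_rels E0 E1 r s X"
    unfolding cohn_rels_def using assms by blast
  thus ?thesis unfolding eqv_def gap_eq[symmetric] by (rule relI)
qed

end


context cg begin

primrec walk :: "'v \<Rightarrow> 'e list \<Rightarrow> 'v \<Rightarrow> bool" where
  "walk u [] v \<longleftrightarrow> u = v \<and> u \<in> E0"
| "walk u (e#es) v \<longleftrightarrow> e \<in> E1 \<and> s e = u \<and> walk (r e) es v"

primrec P :: "'v \<Rightarrow> 'e list \<Rightarrow> ('v,'e) gen list \<Rightarrow> 'k::field" where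
  "P u [] = V u"
| "P u (e#es) = fmul (Ee e) (P (r e) es)"

primrec G :: "'v \<Rightarrow> 'e list \<Rightarrow> ('v,'e) gen list \<Rightarrow> 'k::field" where
  "G u [] = V u"
| "G u (e#es) = fmul (G (r e) es) (Gg e)"

lemma walk_E0: "walk u p v \<Longrightarrow> u \<in> E0 \<and> v \<in> E0"
  by (induction p arbitrary: u) (auto simp: s_E0)

lemma walk_append: "walk u (a@b) v \<longleftrightarrow> (\<exists>m. walk u a m \<and> walk m b v)"
  by (induction a arbitrary: u) (auto dest: walk_E0)

lemma R1': "v \<in> E0 \<Longrightarrow> fmul (V v) (V v) \<approx> V v" using R1[of v v] by simp

lemma walk_det: "walk u p v \<Longrightarrow> walk u p v' \<Longrightarrow> v = v'"
  by (induction p arbitrary: u) auto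

lemma walk_E1: "walk u p v \<Longrightarrow> set p \<subseteq> E1"
  by (induction p arbitrary: u) auto

lemma FA_P: "walk u p v \<Longrightarrow> P u p \<in> FA E0 E1"
  by (induction p arbitrary: u) (auto simp: FA_V FA_Ee FA_fmul)

lemma FA_G: "walk u p v \<Longrightarrow> G u p \<in> FA E0 E1"
  by (induction p arbitrary: u) (auto simp: FA_V FA_Gg FA_fmul)

lemma VP: "walk u p v \<Longrightarrow> fmul (V u) (P u p) \<approx> (P u p :: ('v,'e) gen list \<Rightarrow> 'k::field)"
proof (cases p)
  case Nil
  assume "walk u p v" thus ?thesis using R1' Nil by auto
next
  case (Cons e p')
  assume w: "walk u p v"
  hence "fmul (V u) (P u p :: ('v,'e) gen list \<Rightarrow> 'k) = fmul (fmul (V (s e)) (Ee e)) (P (r e) p')" using Cons by (simp add: fmul_assoc)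
  also have "\<dots> \<approx> fmul (Ee e) (P (r e) p')"
    using w Cons by (intro eqv_rmul R2 FA_P[of _ _ v]) auto
  finally show ?thesis using Cons by simp
qed

lemma PV: "walk u p v \<Longrightarrow> fmul (P u p) (V v) \<approx> (P u p :: ('v,'e) gen list \<Rightarrow> 'k::field)"
proof (induction p arbitrary: u)
  case Nil thus ?case using R1' by auto
next
  case (Cons e p)
  hence "fmul (P u (e#p) :: ('v,'e) gen list \<Rightarrow> 'k) (V v) = fmul (Ee e) (fmul (P (r e) p) (V v))" by (simp add: fmul_assoc)
  also have "\<dots> \<approx> fmul (Ee e) (P (r e) p)" using Cons by (intro eqv_lmul FA_Ee) auto
  finally show ?case by simp
qed

lemma PP: "walk u a m \<Longrightarrow> walk m b v \<Longrightarrow> fmul (P u a) (P m b) \<approx> (P u (a@b) :: ('v,'e) gen list \<Rightarrow> 'k::field)"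
proof (induction a arbitrary: u)
  case Nil thus ?case using VP by simp
next
  case (Cons e a)
  hence "fmul (P u (e#a) :: ('v,'e) gen list \<Rightarrow> 'k) (P m b) = fmul (Ee e) (fmul (P (r e) a) (P m b))" by (simp add: fmul_assoc)
  also have "\<dots> \<approx> fmul (Ee e) (P (r e) (a@b))" using Cons by (intro eqv_lmul FA_Ee) auto
  finally show ?case by simp
qed

lemma GV: "walk u p v \<Longrightarrow> fmul (G u p) (V u) \<approx> (G u p :: ('v,'e) gen list \<Rightarrow> 'k::field)"
proof (cases p)
  case Nil
  assume "walk u p v" thus ?thesis using R1' Nil by auto
next
  case (Cons e p')
  assume w: "walk u p v"
  hence "fmul (G u p :: ('v,'e) gen list \<Rightarrow> 'k) (V u) = fmul (G (r e) p') (fmul (Gg e) (V (s e)))" using Cons by (simp add: fmul_assoc)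
  also have "\<dots> \<approx> fmul (G (r e) p') (Gg e)"
    using w Cons by (intro eqv_lmul R5 FA_G[of _ _ v]) auto
  finally show ?thesis using Cons by simp
qed

lemma VG: "walk u p v \<Longrightarrow> fmul (V v) (G u p) \<approx> (G u p :: ('v,'e) gen list \<Rightarrow> 'k::field)"
proof (induction p arbitrary: u)
  case Nil thus ?case using R1' by auto
next
  case (Cons e p)
  hence "fmul (V v) (G u (e#p) :: ('v,'e) gen list \<Rightarrow> 'k) = fmul (fmul (V v) (G (r e) p)) (Gg e)" by (simp add: fmul_assoc)
  also have "\<dots> \<approx> fmul (G (r e) p) (Gg e)" using Cons by (intro eqv_rmul FA_Gg) auto
  finally show ?case by simp
qed

lemma GG: "walk u a m \<Longrightarrow> walk m b v \<Longrightarrow> fmul (G m b) (G u a) \<approx> (G u (a@b) :: ('v,'e) gen list \<Rightarrow> 'k::field)"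
proof (induction a arbitrary: u)
  case Nil thus ?case using GV by simp
next
  case (Cons e a)
  hence "fmul (G m b) (G u (e#a) :: ('v,'e) gen list \<Rightarrow> 'k) = fmul (fmul (G m b) (G (r e) a)) (Gg e)" by (simp add: fmul_assoc)
  also have "\<dots> \<approx> fmul (G (r e) (a@b)) (Gg e)" using Cons by (intro eqv_rmul FA_Gg) auto
  finally show ?case by simp
qed

end


type_synonym ('v,'e,'k) el = "('v,'e) gen list \<Rightarrow> 'k"

context cg begin

definition gp :: "'v \<Rightarrow> 'v \<Rightarrow> 'e list \<Rightarrow> 'e list \<Rightarrow> ('v,'e,'k::field) el" where
  "gp x y a b = (if take (length a) b = a then P x (drop (length a) b)
                 else if take (length b) a = b then G y (drop (length b) a) else fzero)"

lemma GP: "walk u a x \<Longrightarrow> walk u b y \<Longrightarrow> fmul (G u a) (P u b) \<approx> (gp x y a b :: ('v,'e,'k::field) el)"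
proof (induction a arbitrary: u b)
  case Nil
  hence "u = x" by simp
  thus ?case using VP[OF Nil(2)] by (simp add: gp_def)
next
  case (Cons e a)
  show ?case
  proof (cases b)
    case Nil
    with Cons.prems have "u = y" by simp
    thus ?thesis using GV[OF Cons.prems(1)] Nil by (simp add: gp_def)
  next
    case Cons2: (Cons f b')
    have e: "e \<in> E1" "s e = u" "walk (r e) a x" using Cons.prems by auto
    have f: "f \<in> E1" "s f = u" "walk (r f) b' y" using Cons.prems Cons2 by auto
    have "fmul (G u (e#a)) (P u b) = (fmul (G (r e) a) (fmul (fmul (Gg e) (Ee f)) (P (r f) b')) :: ('v,'e,'k) el)"
      using Cons2 by (simp add: fmul_assoc)
    also have "\<dots> \<approx> fmul (G (r e) a) (fmul (if e = f then V (r e) else fzero) (P (r f) b'))"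
      using e f by (intro eqv_lmul eqv_rmul R6 FA_G FA_P) auto
    finally have 1: "fmul (G u (e#a)) (P u b) \<approx> (fmul (G (r e) a) (fmul (if e = f then V (r e) else fzero) (P (r f) b')) :: ('v,'e,'k) el)" .
    show ?thesis
    proof (cases "e = f")
      case True
      have "fmul (G (r e) a) (fmul (V (r e)) (P (r f) b')) \<approx> (fmul (G (r e) a) (P (r e) b') :: ('v,'e,'k) el)"
        using True eqv_lmul[OF FA_G[OF e(3)] VP[OF f(3)]] by simp
      also have "\<dots> \<approx> gp x y a b'" using Cons.IH e f True by auto
      also have "gp x y a b' = (gp x y (e#a) b :: ('v,'e,'k) el)" using Cons2 True by (simp add: gp_def)
      finally have 2: "fmul (G (r e) a) (fmul (V (r e)) (P (r f) b')) \<approx> (gp x y (e#a) b :: ('v,'e,'k) el)" .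
      from 1 have "fmul (G u (e#a)) (P u b) \<approx> (fmul (G (r e) a) (fmul (V (r e)) (P (r f) b')) :: ('v,'e,'k) el)"
        using True by simp
      thus ?thesis using 2 by (rule eqv_trans)
    next
      case False
      have "gp x y (e#a) b = (fzero :: ('v,'e,'k) el)" using Cons2 False by (simp add: gp_def)
      thus ?thesis using 1 False by (simp add: fmul_fzero_left fmul_fzero_right)
    qed
  qed
qed

end


context cg begin

fun trm :: "'v \<times> 'e list \<times> 'v \<times> 'e list \<Rightarrow> ('v,'e,'k::field) el" where
  "trm (u, m, w, n) = fmul (P u m) (G w n)"

fun valid :: "'v \<times> 'e list \<times> 'v \<times> 'e list \<Rightarrow> bool" where
  "valid (u, m, w, n) \<longleftrightarrow> (\<exists>z. walk u m z \<and> walk w n z)"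

lemma FA_trm: "valid t \<Longrightarrow> trm t \<in> FA E0 E1"
  by (cases t) (auto intro: FA_fmul FA_P FA_G)

lemma G_V_ne: assumes "walk w n z" "v \<in> E0" "v \<noteq> w"
  shows "fmul (G w n) (V v) \<approx> (fzero :: ('v,'e,'k::field) el)"
proof -
  have w: "w \<in> E0" using walk_E0[OF assms(1)] by simp
  have "fmul (G w n) (V v) \<approx> (fmul (fmul (G w n) (V w)) (V v) :: ('v,'e,'k) el)"
    by (rule eqv_rmul[OF FA_V[OF assms(2)] eqv_sym[OF GV[OF assms(1)]]])
  also have "\<dots> = fmul (G w n) (fmul (V w) (V v))" by (simp add: fmul_assoc)
  also have "\<dots> \<approx> fmul (G w n) fzero"
    using R1[OF w assms(2)] assms(3) by (intro eqv_lmul FA_G[OF assms(1)]) auto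
  finally show ?thesis by (simp add: fmul_fzero_right)
qed

lemma V_P_ne: assumes "walk w m z" "v \<in> E0" "v \<noteq> w"
  shows "fmul (V v) (P w m) \<approx> (fzero :: ('v,'e,'k::field) el)"
proof -
  have w: "w \<in> E0" using walk_E0[OF assms(1)] by simp
  have "fmul (V v) (P w m) \<approx> (fmul (V v) (fmul (V w) (P w m)) :: ('v,'e,'k) el)"
    by (rule eqv_lmul[OF FA_V[OF assms(2)] eqv_sym[OF VP[OF assms(1)]]])
  also have "\<dots> = fmul (fmul (V v) (V w)) (P w m)" by (simp add: fmul_assoc)
  also have "\<dots> \<approx> fmul fzero (P w m)"
    using R1[OF assms(2) w] assms(3) by (intro eqv_rmul FA_P[OF assms(1)]) auto
  finally show ?thesis by (simp add: fmul_fzero_left)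
qed

lemma P_V_ne: assumes "walk u m z" "v \<in> E0" "v \<noteq> z"
  shows "fmul (P u m) (V v) \<approx> (fzero :: ('v,'e,'k::field) el)"
proof -
  have w: "z \<in> E0" using walk_E0[OF assms(1)] by simp
  have "fmul (P u m) (V v) \<approx> (fmul (fmul (P u m) (V z)) (V v) :: ('v,'e,'k) el)"
    by (rule eqv_rmul[OF FA_V[OF assms(2)] eqv_sym[OF PV[OF assms(1)]]])
  also have "\<dots> = fmul (P u m) (fmul (V z) (V v))" by (simp add: fmul_assoc)
  also have "\<dots> \<approx> fmul (P u m) fzero"
    using R1[OF w assms(2)] assms(3) by (intro eqv_lmul FA_P[OF assms(1)]) auto
  finally show ?thesis by (simp add: fmul_fzero_right)
qed

lemma V_G_ne: assumes "walk w n z" "v \<in> E0" "v \<noteq> z"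
  shows "fmul (V v) (G w n) \<approx> (fzero :: ('v,'e,'k::field) el)"
proof -
  have w: "z \<in> E0" using walk_E0[OF assms(1)] by simp
  have "fmul (V v) (G w n) \<approx> (fmul (V v) (fmul (V z) (G w n)) :: ('v,'e,'k) el)"
    by (rule eqv_lmul[OF FA_V[OF assms(2)] eqv_sym[OF VG[OF assms(1)]]])
  also have "\<dots> = fmul (fmul (V v) (V z)) (G w n)" by (simp add: fmul_assoc)
  also have "\<dots> \<approx> fmul fzero (G w n)"
    using R1[OF assms(2) w] assms(3) by (intro eqv_rmul FA_G[OF assms(1)]) auto
  finally show ?thesis by (simp add: fmul_fzero_left)
qed

lemma trm_gen:
  assumes "valid t" "g \<in> gens E0 E1"
  shows "fmul (trm t) (dl [g]) \<approx> (fzero :: ('v,'e,'k::field) el) \<or> (\<exists>t'. valid t' \<and> fmul (trm t) (dl [g]) \<approx> (trm t' :: ('v,'e,'k) el))"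
proof -
  obtain u m w n where t: "t = (u, m, w, n)" by (cases t)
  then obtain z where wm: "walk u m z" and wn: "walk w n z" using assms(1) by auto
  have FP: "P u m \<in> FA E0 E1" using FA_P[OF wm] .
  have FG: "G w n \<in> FA E0 E1" using FA_G[OF wn] .
  have w0: "w \<in> E0" using walk_E0[OF wn] by simp
  have tr: "fmul (trm t) (dl [g]) = (fmul (P u m) (fmul (G w n) (dl [g])) :: ('v,'e,'k) el)"
    using t by (simp add: fmul_assoc)
  consider (vx) v where "g = Vx v" "v \<in> E0" | (ed) f where "g = Ed f" "f \<in> E1" | (gh) f where "g = Gh f" "f \<in> E1"
    using assms(2) by (auto simp: gens_def)
  thus ?thesis
  proof cases
    case vx
    show ?thesis
    proof (cases "v = w")
      case True
      have "fmul (trm t) (dl [g]) \<approx> (fmul (P u m) (G w n) :: ('v,'e,'k) el)"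
        unfolding tr using vx True GV[OF wn] by (intro eqv_lmul FP) (simp add: V_def)
      thus ?thesis using assms(1) t by (intro disjI2 exI[of _ t]) simp
    next
      case False
      have "fmul (trm t) (dl [g]) \<approx> (fmul (P u m) fzero :: ('v,'e,'k) el)"
        unfolding tr using vx False G_V_ne[OF wn] by (intro eqv_lmul FP) (simp add: V_def)
      thus ?thesis by (simp add: fmul_fzero_right)
    qed
  next
    case ed
    show ?thesis
    proof (cases n)
      case Nil
      hence zw: "z = w" using wn by simp
      show ?thesis
      proof (cases "s f = w")
        case True
        have wf: "walk w [f] (r f)" using ed True r_E0 by simp
        have "fmul (trm t) (dl [g]) \<approx> (fmul (P u m) (Ee f) :: ('v,'e,'k) el)"
          unfolding tr using ed True Nil R2[OF ed(2)] by (intro eqv_lmul FP) (simp add: Ee_def)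
        also have "\<dots> \<approx> fmul (P u m) (P w [f])"
          using eqv_sym[OF R3[OF ed(2)]] by (intro eqv_lmul FP) simp
        also have "\<dots> \<approx> P u (m@[f])" using PP[OF wm[unfolded zw] wf] .
        also have "\<dots> \<approx> fmul (P u (m@[f])) (V (r f))"
          using wm zw wf by (rule_tac eqv_sym, rule_tac PV[of u "m@[f]" "r f"]) (auto simp: walk_append)
        also have "\<dots> = trm (u, m@[f], r f, [])" by simp
        finally show ?thesis using wm zw wf r_E0[OF ed(2)]
          by (intro disjI2 exI[of _ "(u, m@[f], r f, [])"]) (auto simp: walk_append)
      next
        case False
        have "fmul (trm t) (dl [g]) = (fmul (P u m) (fmul (V w) (Ee f)) :: ('v,'e,'k) el)"
          unfolding tr using ed Nil by (simp add: Ee_def)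
        also have "\<dots> \<approx> fmul (P u m) (fmul (V w) (fmul (V (s f)) (Ee f)))"
          by (intro eqv_lmul FP FA_V w0 eqv_sym[OF R2[OF ed(2)]])
        also have "\<dots> = fmul (P u m) (fmul (fmul (V w) (V (s f))) (Ee f))" by (simp add: fmul_assoc)
        also have "\<dots> \<approx> fmul (P u m) (fmul fzero (Ee f))"
          using R1[OF w0 s_E0[OF ed(2)]] False by (intro eqv_lmul eqv_rmul FP FA_Ee ed) auto
        finally show ?thesis by (simp add: fmul_fzero_left fmul_fzero_right)
      qed
    next
      case (Cons e n')
      have e: "e \<in> E1" "s e = w" "walk (r e) n' z" using wn Cons by auto
      have "fmul (trm t) (dl [g]) = (fmul (P u m) (fmul (G (r e) n') (fmul (Gg e) (Ee f))) :: ('v,'e,'k) el)"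
        unfolding tr using Cons ed by (simp add: fmul_assoc Ee_def)
      also have "\<dots> \<approx> fmul (P u m) (fmul (G (r e) n') (if e = f then V (r e) else fzero))"
        using R6[OF e(1) ed(2)] by (intro eqv_lmul FP FA_G[OF e(3)])
      finally have 1: "fmul (trm t) (dl [g]) \<approx> (fmul (P u m) (fmul (G (r e) n') (if e = f then V (r e) else fzero)) :: ('v,'e,'k) el)" .
      show ?thesis
      proof (cases "e = f")
        case True
        have "fmul (P u m) (fmul (G (r e) n') (V (r e))) \<approx> (fmul (P u m) (G (r e) n') :: ('v,'e,'k) el)"
          by (intro eqv_lmul FP GV[OF e(3)])
        moreover have "fmul (trm t) (dl [g]) \<approx> (fmul (P u m) (fmul (G (r e) n') (V (r e))) :: ('v,'e,'k) el)"
          using 1 True by simp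
        ultimately have "fmul (trm t) (dl [g]) \<approx> (trm (u, m, r e, n') :: ('v,'e,'k) el)"
          using eqv_trans by simp
        thus ?thesis using wm e by (intro disjI2 exI[of _ "(u, m, r e, n')"]) auto
      next
        case False
        thus ?thesis using 1 by (simp add: fmul_fzero_right)
      qed
    qed
  next
    case gh
    show ?thesis
    proof (cases "r f = w")
      case True
      have "fmul (trm t) (dl [g]) = (trm (u, m, s f, f#n) :: ('v,'e,'k) el)"
        unfolding tr using gh True by (simp add: Gg_def)
      thus ?thesis using wm wn gh True by (intro disjI2 exI[of _ "(u, m, s f, f#n)"]) auto
    next
      case False
      have "fmul (trm t) (dl [g]) = (fmul (P u m) (fmul (G w n) (Gg f)) :: ('v,'e,'k) el)"
        unfolding tr using gh by (simp add: Gg_def)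
      also have "\<dots> \<approx> fmul (P u m) (fmul (G w n) (fmul (V (r f)) (Gg f)))"
        by (intro eqv_lmul FP FG eqv_sym[OF R4[OF gh(2)]])
      also have "\<dots> = fmul (P u m) (fmul (fmul (G w n) (V (r f))) (Gg f))" by (simp add: fmul_assoc)
      also have "\<dots> \<approx> fmul (P u m) (fmul fzero (Gg f))"
        using False by (intro eqv_lmul eqv_rmul FP FA_Gg gh G_V_ne[OF wn] r_E0) auto
      finally show ?thesis by (simp add: fmul_fzero_left fmul_fzero_right)
    qed
  qed
qed

end


context cg begin

lemma span_gen:
  assumes "g \<in> gens E0 E1"
  shows "\<exists>t. valid t \<and> dl [g] \<approx> (trm t :: ('v,'e,'k::field) el)"
proof -
  consider (vx) v where "g = Vx v" "v \<in> E0" | (ed) f where "g = Ed f" "f \<in> E1" | (gh) f where "g = Gh f" "f \<in> E1"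
    using assms by (auto simp: gens_def)
  thus ?thesis
  proof cases
    case vx
    have "dl [g] \<approx> (trm (v, [], v, []) :: ('v,'e,'k) el)"
      using vx eqv_sym[OF R1'[OF vx(2)]] by (simp add: V_def)
    thus ?thesis using vx by (intro exI[of _ "(v, [], v, [])"]) auto
  next
    case ed
    have "dl [g] = (Ee f :: ('v,'e,'k) el)" using ed by (simp add: Ee_def)
    also have "\<dots> \<approx> fmul (Ee f) (V (r f))" by (rule eqv_sym[OF R3[OF ed(2)]])
    also have "\<dots> \<approx> fmul (fmul (Ee f) (V (r f))) (V (r f))"
      by (intro eqv_rmul FA_V r_E0 ed eqv_sym[OF R3[OF ed(2)]])
    also have "\<dots> = trm (s f, [f], r f, [])" by simp
    finally show ?thesis using ed r_E0[OF ed(2)] by (intro exI[of _ "(s f, [f], r f, [])"]) auto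
  next
    case gh
    have "dl [g] = (Gg f :: ('v,'e,'k) el)" using gh by (simp add: Gg_def)
    also have "\<dots> \<approx> fmul (V (r f)) (Gg f)" by (rule eqv_sym[OF R4[OF gh(2)]])
    also have "\<dots> \<approx> fmul (V (r f)) (fmul (V (r f)) (Gg f))"
      by (intro eqv_lmul FA_V r_E0 gh eqv_sym[OF R4[OF gh(2)]])
    also have "\<dots> = trm (r f, [], s f, [f])" by simp
    finally show ?thesis using gh r_E0[OF gh(2)] by (intro exI[of _ "(r f, [], s f, [f])"]) auto
  qed
qed

lemma span_word:
  "z \<noteq> [] \<Longrightarrow> set z \<subseteq> gens E0 E1 \<Longrightarrow> dl z \<approx> (fzero :: ('v,'e,'k::field) el) \<or> (\<exists>t. valid t \<and> dl z \<approx> (trm t :: ('v,'e,'k) el))"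
proof (induction z rule: rev_induct)
  case Nil thus ?case by simp
next
  case (snoc g z)
  have g: "g \<in> gens E0 E1" using snoc.prems by simp
  show ?case
  proof (cases "z = []")
    case True
    obtain t where t: "valid t" "dl [g] \<approx> (trm t :: ('v,'e,'k) el)" using span_gen[OF g, where 'k='k] by blast
    show ?thesis using True t by (intro disjI2 exI[of _ t]) simp
  next
    case False
    have FAg: "dl [g] \<in> FA E0 E1" using g by (intro FA_dl) auto
    have eq: "dl (z@[g]) = (fmul (dl z) (dl [g]) :: ('v,'e,'k) el)" using False by (simp add: fmul_dl)
    from snoc.IH[OF False] snoc.prems
    have "dl z \<approx> (fzero :: ('v,'e,'k::field) el) \<or> (\<exists>t. valid t \<and> dl z \<approx> (trm t :: ('v,'e,'k) el))" by simp
    thus ?thesis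
    proof
      assume "dl z \<approx> (fzero :: ('v,'e,'k::field) el)"
      hence "fmul (dl z) (dl [g]) \<approx> (fmul fzero (dl [g]) :: ('v,'e,'k) el)" by (rule eqv_rmul[OF FAg])
      thus ?thesis unfolding eq by (simp add: fmul_fzero_left)
    next
      assume "\<exists>t. valid t \<and> dl z \<approx> (trm t :: ('v,'e,'k) el)"
      then obtain t where t: "valid t" "dl z \<approx> (trm t :: ('v,'e,'k) el)" by blast
      hence 1: "fmul (dl z) (dl [g]) \<approx> (fmul (trm t) (dl [g]) :: ('v,'e,'k) el)" by (intro eqv_rmul FAg)
      from trm_gen[OF t(1) g]
      have "fmul (trm t) (dl [g]) \<approx> (fzero :: ('v,'e,'k::field) el) \<or> (\<exists>t'. valid t' \<and> fmul (trm t) (dl [g]) \<approx> (trm t' :: ('v,'e,'k) el))" .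
      thus ?thesis unfolding eq using 1 eqv_trans by blast
    qed
  qed
qed

definition ev :: "('v \<times> 'e list \<times> 'v \<times> 'e list) set \<Rightarrow> ('v \<times> 'e list \<times> 'v \<times> 'e list \<Rightarrow> 'k) \<Rightarrow> ('v,'e,'k::field) el" where
  "ev S c = fsum S (\<lambda>t. fsmul (c t) (trm t))"

lemma span_FA:
  assumes "f \<in> FA E0 E1"
  shows "\<exists>S c. finite S \<and> (\<forall>t\<in>S. valid t) \<and> f \<approx> (ev S c :: ('v,'e,'k::field) el)"
proof -
  define Z where "Z = {w. f w \<noteq> 0}"
  have finZ: "finite Z" using FA_D1[OF assms] by (simp add: Z_def)
  define Z1 where "Z1 = {w\<in>Z. \<exists>t. valid t \<and> dl w \<approx> (trm t :: ('v,'e,'k) el)}"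
  define T where "T w = (SOME t. valid t \<and> dl w \<approx> (trm t :: ('v,'e,'k) el))" for w
  have T: "valid (T w) \<and> dl w \<approx> (trm (T w) :: ('v,'e,'k) el)" if "w \<in> Z1" for w
    using that unfolding Z1_def T_def by (metis (mono_tags, lifting) mem_Collect_eq someI_ex)
  have "f = fsum Z (\<lambda>w. fsmul (f w) (dl w))" unfolding Z_def by (rule FA_decomp[OF assms])
  also have "\<dots> \<approx> fsum Z (\<lambda>w. if w \<in> Z1 then fsmul (f w) (trm (T w)) else fzero)"
  proof (rule eqv_fsum[OF finZ])
    fix w assume wZ: "w \<in> Z"
    hence ne: "w \<noteq> [] \<and> set w \<subseteq> gens E0 E1" using FA_D2[OF assms] by (auto simp: Z_def)
    show "fsmul (f w) (dl w) \<approx> (if w \<in> Z1 then fsmul (f w) (trm (T w)) else fzero)"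
    proof (cases "w \<in> Z1")
      case True thus ?thesis using T[OF True] by (simp add: eqv_smul)
    next
      case False
      hence "dl w \<approx> (fzero :: ('v,'e,'k) el)" using span_word[of w, where 'k='k] ne wZ unfolding Z1_def by blast
      hence "fsmul (f w) (dl w) \<approx> (fsmul (f w) fzero :: ('v,'e,'k) el)" by (rule eqv_smul)
      thus ?thesis using False by (simp add: fsmul_def fzero_def)
    qed
  qed
  also have "\<dots> = fsum Z1 (\<lambda>w. fsmul (f w) (trm (T w)))"
    unfolding fsum_def fzero_def
  proof (rule ext)
    fix x
    have "Z1 \<subseteq> Z" by (auto simp: Z1_def)
    thus "(\<Sum>i\<in>Z. (if i \<in> Z1 then fsmul (f i) (trm (T i)) else (\<lambda>w. 0)) x) = (\<Sum>i\<in>Z1. fsmul (f i) (trm (T i)) x)"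
      using finZ by (intro sum.mono_neutral_cong_right) auto
  qed
  also have "\<dots> = ev (T ` Z1) (\<lambda>t. \<Sum>w\<in>{w\<in>Z1. T w = t}. f w)"
    unfolding ev_def fsum_def fsmul_def
  proof (rule ext)
    fix x
    have finZ1: "finite Z1" using finZ by (auto simp: Z1_def)
    have "(\<Sum>w\<in>Z1. f w * trm (T w) x) = (\<Sum>t\<in>T ` Z1. \<Sum>w\<in>{w\<in>Z1. T w = t}. f w * trm (T w) x)"
      by (rule sum.image_gen[OF finZ1])
    also have "\<dots> = (\<Sum>t\<in>T ` Z1. (\<Sum>w\<in>{w\<in>Z1. T w = t}. f w) * trm t x)"
      by (rule sum.cong) (auto simp: sum_distrib_right)
    finally show "(\<Sum>w\<in>Z1. f w * trm (T w) x) = (\<Sum>t\<in>T ` Z1. (\<Sum>w\<in>{w\<in>Z1. T w = t}. f w) * trm t x)" .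
  qed
  finally show ?thesis using finZ T by (intro exI[of _ "T ` Z1"] exI conjI) (auto simp: Z1_def)
qed

end


context cg begin

lemma walk_hd: "walk u p v \<Longrightarrow> p \<noteq> [] \<Longrightarrow> s (hd p) = u"
  by (cases p) auto

lemma walk_last: "walk u p v \<Longrightarrow> p \<noteq> [] \<Longrightarrow> r (last p) = v"
  by (induction p arbitrary: u) (auto split: if_splits)

lemma walk_consec: "walk u p v \<Longrightarrow> Suc i < length p \<Longrightarrow> r (p!i) = s (p!Suc i)"
proof (induction p arbitrary: u i)
  case Nil thus ?case by simp
next
  case (Cons e p)
  show ?case
  proof (cases i)
    case 0 thus ?thesis using Cons.prems by (cases p) auto
  next
    case (Suc k) thus ?thesis using Cons by auto
  qed
qed

lemma walk_take: "walk u p v \<Longrightarrow> j < length p \<Longrightarrow> walk u (take j p) (s (p!j))"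
proof (induction p arbitrary: u j)
  case Nil thus ?case by simp
next
  case (Cons e p)
  show ?case
  proof (cases j)
    case 0 thus ?thesis using Cons.prems s_E0 by auto
  next
    case (Suc k) thus ?thesis using Cons by auto
  qed
qed

lemma walk_cycle: "walk w p w \<Longrightarrow> p \<noteq> [] \<Longrightarrow> is_cycle E1 r s p \<longleftrightarrow> distinct (map s p)"
  unfolding is_cycle_def using walk_E1 walk_consec walk_hd walk_last by metis

lemma cyc_exists: "walk w p w \<Longrightarrow> p \<noteq> [] \<Longrightarrow> \<exists>c. walk w c w \<and> c \<noteq> [] \<and> distinct (map s c)"
proof (induction "length p" arbitrary: p rule: less_induct)
  case less
  show ?case
  proof (cases "distinct (map s p)")
    case True thus ?thesis using less.prems by blast
  next
    case False
    then obtain xs ys zs y where d: "map s p = xs@[y]@ys@[y]@zs" using not_distinct_decomp by blast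
    then obtain a p1 where p1: "p = a @ p1" "map s a = xs" "map s p1 = [y]@ys@[y]@zs"
      by (auto simp: map_eq_append_conv)
    then obtain e1 p2 where p2: "p1 = e1 # p2" "s e1 = y" "map s p2 = ys@[y]@zs"
      by (auto simp: map_eq_Cons_conv)
    then obtain b p3 where p3: "p2 = b @ p3" "map s p3 = [y]@zs"
      by (auto simp: map_eq_append_conv)
    then obtain e2 d where p4: "p3 = e2 # d" "s e2 = y"
      by (auto simp: map_eq_Cons_conv)
    have eq: "p = a @ e1 # b @ e2 # d" using p1 p2 p3 p4 by simp
    from less.prems(1) obtain m where m: "walk w a m" "walk m (e1 # b @ e2 # d) w"
      unfolding eq by (auto simp: walk_append)
    hence "m = y" using p2 by simp
    from m(2) obtain m' where "walk m (e1#b) m'" "walk m' (e2#d) w" by (auto simp: walk_append)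
    hence "m' = y" using p4 by simp
    have w': "walk w (a @ e2 # d) w" using m \<open>m = y\<close> \<open>m' = y\<close> \<open>walk m' (e2#d) w\<close>
      by (auto simp: walk_append)
    have "length (a @ e2 # d) < length p" unfolding eq by simp
    from less.hyps[OF this w'] show ?thesis by simp
  qed
qed

lemma nth_rep:
  assumes "j \<le> length c" "p < M * length c + j"
  shows "(concat (replicate M c) @ take j c) ! p = c ! (p mod length c)"
  using assms
proof (induction M arbitrary: p)
  case 0 thus ?case by (simp add: nth_append)
next
  case (Suc M)
  show ?case
  proof (cases "p < length c")
    case True thus ?thesis by (simp add: nth_append)
  next
    case False
    hence "p - length c < M * length c + j" using Suc.prems by simp
    from Suc.IH[OF Suc.prems(1) this] False show ?thesis
      by (simp add: nth_append le_mod_geq)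
  qed
qed

lemma walk_rep: "walk w c w \<Longrightarrow> w \<in> E0 \<Longrightarrow> walk w (concat (replicate M c)) w"
  by (induction M) (auto simp: walk_append)

lemma lam_exists:
  assumes L: "condition_L E1 r s" and w: "w \<in> E0" and fin: "finite T"
    and T: "\<And>\<tau>. \<tau> \<in> T \<Longrightarrow> walk w \<tau> w \<and> \<tau> \<noteq> []"
  shows "\<exists>lam z. walk w lam z \<and> (\<forall>\<tau>\<in>T. take (length lam) (\<tau>@lam) \<noteq> lam)"
proof (cases "T = {}")
  case True thus ?thesis using w by (intro exI[of _ "[]"]) auto
next
  case False
  then obtain \<tau>0 where "\<tau>0 \<in> T" by blast
  then obtain c where c: "walk w c w" "c \<noteq> []" "distinct (map s c)" using cyc_exists T by blast
  hence "is_cycle E1 r s c" using walk_cycle by blast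
  then obtain e where "is_exit E1 s c e" using L unfolding condition_L_def by blast
  then obtain j where e: "e \<in> E1" "j < length c" "s e = s (c!j)" "e \<noteq> c!j" unfolding is_exit_def by blast
  define n where "n = length c"
  have n: "n \<ge> 1" using c(2) by (simp add: n_def Suc_le_eq)
  define N where "N = Max (length ` T)"
  have TN: "length \<tau> \<le> N" if "\<tau> \<in> T" for \<tau> unfolding N_def using fin that by simp
  define M where "M = Suc N"
  define lam where "lam = concat (replicate M c) @ take j c @ [e]"
  have len: "length lam = M * n + j + 1" unfolding lam_def n_def using e(2) by (simp add: length_concat sum_list_replicate min_def)
  have w1: "walk w (concat (replicate M c)) w" using walk_rep c(1) w by simp
  have w2: "walk w (take j c) (s (c!j))" using walk_take[OF c(1) e(2)] .
  have wl: "walk w lam (r e)" unfolding lam_def using w1 w2 e r_E0 by (auto simp: walk_append)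
  have idx: "lam ! p = c ! (p mod n)" if "p < M * n + j" for p
  proof -
    have "lam ! p = (concat (replicate M c) @ take j c) ! p"
      unfolding lam_def append_assoc[symmetric] using that e(2) n_def
      by (subst nth_append) (simp add: length_concat sum_list_replicate min_def)
    also have "\<dots> = c ! (p mod n)" using nth_rep[of j c p M] that e(2) n_def by simp
    finally show ?thesis .
  qed
  have lastl: "lam ! (M * n + j) = e" unfolding lam_def using e(2) n_def
    by (simp add: nth_append length_concat sum_list_replicate min_def)
  have c0: "s (c!0) = w" using walk_hd[OF c(1) c(2)] c(2) by (simp add: hd_conv_nth)
  show ?thesis
  proof (intro exI conjI ballI)
    show "walk w lam (r e)" by (rule wl)
  next
    fix \<tau> assume \<tau>T: "\<tau> \<in> T"
    show "take (length lam) (\<tau>@lam) \<noteq> lam"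
    proof
      assume pre: "take (length lam) (\<tau>@lam) = lam"
      define t where "t = length \<tau>"
      have t1: "t \<ge> 1" using T[OF \<tau>T] by (simp add: t_def Suc_le_eq)
      have tN: "t \<le> N" using TN[OF \<tau>T] by (simp add: t_def)
      have MnN: "N < M * n" using n unfolding M_def by (metis le_add1 less_le_trans mult.commute mult_1 mult_le_mono1 lessI mult_Suc_right nat_mult_le_cancel_disj)
      define L where "L = M * n + j"
      have tL: "t \<le> L" using tN MnN unfolding L_def by simp
      have lenL: "length lam = Suc L" using len L_def by simp
      have tk: "take t lam = \<tau>"
      proof -
        have "take t (take (length lam) (\<tau>@lam)) = take t (\<tau>@lam)" using tL lenL by (simp add: min_def)
        also have "\<dots> = \<tau>" by (simp add: t_def)
        finally show ?thesis unfolding pre .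
      qed
      have nthL: "lam ! L = lam ! (L - t)"
      proof -
        have "lam ! L = take (length lam) (\<tau>@lam) ! L" using pre by simp
        also have "\<dots> = (\<tau>@lam) ! L" using lenL by (metis lessI nth_take)
        also have "\<dots> = lam ! (L - t)" using tL by (simp add: nth_append t_def)
        finally show ?thesis .
      qed
      have st: "s (lam ! t) = w"
      proof -
        have "walk w (take t lam) (s (lam!t))" using walk_take[OF wl] tL lenL by simp
        with tk T[OF \<tau>T] walk_det show ?thesis by metis
      qed
      have tmod: "t mod n = 0"
      proof (cases "t < L")
        case True
        hence "s (c ! (t mod n)) = s (c ! 0)" using st idx[of t] c0 L_def by simp
        moreover have "t mod n < length c" using c(2) n_def by simp
        ultimately show ?thesis using c(3) c(2) nth_eq_iff_index_eq[of "map s c"] by (simp add: n_def)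
      next
        case False
        hence tL': "t = L" using tL by simp
        hence "s e = w" using st lastl L_def by simp
        hence "s (c!j) = s (c!0)" using e(3) c0 by simp
        hence "j = 0" using c(3) c(2) e(2) nth_eq_iff_index_eq[of "map s c"] by simp
        thus ?thesis using tL' L_def by simp
      qed
      then obtain q where q: "t = q * n" by (metis mod_eq_0_iff_dvd dvd_def mult.commute)
      have "q \<le> M"
      proof (rule ccontr)
        assume "\<not> q \<le> M" hence "Suc M \<le> q" by simp
        hence "Suc M * n \<le> q * n" by (rule mult_le_mono1)
        thus False using tL q L_def e(2) n_def by simp
      qed
      have Lt: "L - t = (M - q) * n + j" using q \<open>q \<le> M\<close> L_def by (simp add: diff_mult_distrib)
      have "L - t < M * n + j" using t1 tL L_def by simp
      hence "lam ! (L - t) = c ! ((L - t) mod n)" by (rule idx)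
      also have "(L - t) mod n = j" using Lt e(2) n_def by simp
      finally have "lam ! L = c ! j" using nthL by simp
      thus False using lastl L_def e(4) by simp
    qed
  qed
qed

end


context cg begin

lemma fsum_filter_if: "finite A \<Longrightarrow> fsum A (\<lambda>i. if Q i then f i else fzero) = fsum {i\<in>A. Q i} f"
  unfolding fsum_def fzero_def
proof (rule ext)
  fix w assume A: "finite A"
  have "(\<Sum>i\<in>A. (if Q i then f i else (\<lambda>w. 0)) w) = (\<Sum>i\<in>A. if Q i then f i w else 0)"
    by (rule sum.cong) auto
  also have "\<dots> = (\<Sum>i\<in>{i\<in>A. Q i}. f i w)" by (rule sum.inter_filter[symmetric, OF A])
  finally show "(\<Sum>i\<in>A. (if Q i then f i else (\<lambda>w. 0)) w) = (\<Sum>i\<in>{i\<in>A. Q i}. f i w)" .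
qed

lemma td_eq: "take (length a) x = a \<Longrightarrow> a @ drop (length a) x = x"
  by (metis append_take_drop_id)

lemma peel:
  assumes fin: "finite S" and W: "\<And>\<mu>. \<mu> \<in> S \<Longrightarrow> walk u \<mu> w" and m1: "\<mu>1 \<in> S"
    and mn: "\<And>\<mu>. \<mu> \<in> S \<Longrightarrow> length \<mu>1 \<le> length \<mu>"
  shows "fmul (G u \<mu>1) (fsum S (\<lambda>\<mu>. fsmul (c \<mu>) (P u \<mu>))) \<approx>
         (fsum {\<tau>. \<mu>1@\<tau> \<in> S} (\<lambda>\<tau>. fsmul (c (\<mu>1@\<tau>)) (P w \<tau>)) :: ('v,'e,'k::field) el)"
proof -
  have "fmul (G u \<mu>1) (fsum S (\<lambda>\<mu>. fsmul (c \<mu>) (P u \<mu>))) = (fsum S (\<lambda>\<mu>. fsmul (c \<mu>) (fmul (G u \<mu>1) (P u \<mu>))) :: ('v,'e,'k) el)"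
    by (simp add: fmul_fsum_right fmul_fsmul_right)
  also have "\<dots> \<approx> fsum S (\<lambda>\<mu>. fsmul (c \<mu>) (gp w w \<mu>1 \<mu>))"
    using fin W m1 by (intro eqv_fsum eqv_smul GP) auto
  also have "\<dots> = fsum S (\<lambda>\<mu>. if take (length \<mu>1) \<mu> = \<mu>1 then fsmul (c \<mu>) (P w (drop (length \<mu>1) \<mu>)) else fzero)"
  proof (rule fsum_cong)
    fix \<mu> assume "\<mu> \<in> S"
    hence le: "length \<mu>1 \<le> length \<mu>" by (rule mn)
    show "fsmul (c \<mu>) (gp w w \<mu>1 \<mu>) = (if take (length \<mu>1) \<mu> = \<mu>1 then fsmul (c \<mu>) (P w (drop (length \<mu>1) \<mu>)) else fzero)"
    proof (cases "take (length \<mu>1) \<mu> = \<mu>1")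
      case True thus ?thesis by (simp add: gp_def)
    next
      case False
      have "take (length \<mu>) \<mu>1 \<noteq> \<mu>"
      proof
        assume "take (length \<mu>) \<mu>1 = \<mu>"
        hence "\<mu>1 = \<mu>" using le by simp
        thus False using False by simp
      qed
      thus ?thesis using False by (simp add: gp_def fsmul_def fzero_def)
    qed
  qed
  also have "\<dots> = fsum {\<mu>\<in>S. take (length \<mu>1) \<mu> = \<mu>1} (\<lambda>\<mu>. fsmul (c \<mu>) (P w (drop (length \<mu>1) \<mu>)))"
    by (rule fsum_filter_if[OF fin])
  also have "\<dots> = fsum {\<tau>. \<mu>1@\<tau> \<in> S} (\<lambda>\<tau>. fsmul (c (\<mu>1@\<tau>)) (P w \<tau>))"
    unfolding fsum_def
    by (rule ext, rule sum.reindex_bij_witness[where i="\<lambda>\<tau>. \<mu>1@\<tau>" and j="drop (length \<mu>1)"])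
       (auto simp: td_eq)
  finally show ?thesis .
qed

lemma sandwich:
  assumes fin: "finite T0" and e0: "[] \<in> T0" and FL: "LL \<in> FA E0 E1" and FR: "RR \<in> FA E0 E1"
    and ne: "\<And>\<tau>. \<tau> \<in> T0 \<Longrightarrow> \<tau> \<noteq> [] \<Longrightarrow> fmul LL (fmul (P w \<tau>) RR) \<approx> (fzero :: ('v,'e,'k::field) el)"
    and em: "fmul LL (fmul (P w []) RR) \<approx> (Z :: ('v,'e,'k) el)"
  shows "fmul LL (fmul (fsum T0 (\<lambda>\<tau>. fsmul (d \<tau>) (P w \<tau>))) RR) \<approx> fsmul (d []) Z"
proof -
  have "fmul LL (fmul (fsum T0 (\<lambda>\<tau>. fsmul (d \<tau>) (P w \<tau>))) RR) = fsum T0 (\<lambda>\<tau>. fsmul (d \<tau>) (fmul LL (fmul (P w \<tau>) RR)))"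
    by (simp add: fmul_fsum_right fmul_fsum_left fmul_fsmul_right fmul_fsmul_left)
  also have "\<dots> \<approx> fsum T0 (\<lambda>\<tau>. if \<tau> = [] then fsmul (d \<tau>) Z else fzero)"
  proof (rule eqv_fsum[OF fin])
    fix \<tau> assume "\<tau> \<in> T0"
    show "fsmul (d \<tau>) (fmul LL (fmul (P w \<tau>) RR)) \<approx> (if \<tau> = [] then fsmul (d \<tau>) Z else fzero)"
    proof (cases "\<tau> = []")
      case True thus ?thesis using eqv_smul[OF em] by simp
    next
      case False
      hence "fsmul (d \<tau>) (fmul LL (fmul (P w \<tau>) RR)) \<approx> fsmul (d \<tau>) (fzero :: ('v,'e,'k) el)"
        using ne[OF \<open>\<tau> \<in> T0\<close>] by (intro eqv_smul) auto
      thus ?thesis using False by (simp add: fsmul_def fzero_def)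
    qed
  qed
  also have "\<dots> = fsmul (d []) Z"
    unfolding fsum_def fzero_def
  proof (rule ext)
    fix x
    have "(\<Sum>i\<in>T0. (if i = [] then fsmul (d i) Z else (\<lambda>w. 0)) x) = (\<Sum>i\<in>T0. if i = [] then fsmul (d i) Z x else 0)"
      by (rule sum.cong) auto
    also have "\<dots> = fsmul (d []) Z x" using fin e0 by (simp add: sum.delta)
    finally show "(\<Sum>i\<in>T0. (if i = [] then fsmul (d i) Z else (\<lambda>w. 0)) x) = fsmul (d []) Z x" .
  qed
  finally show ?thesis .
qed

lemma walk_suffix: "walk u (a@b) w \<Longrightarrow> walk u a m \<Longrightarrow> walk m b w"
  by (auto simp: walk_append dest: walk_det)

lemma peel_min:
  assumes fin: "finite S" and W: "\<And>\<mu>. \<mu> \<in> S \<Longrightarrow> walk u \<mu> w" and ne: "S \<noteq> {}"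
  shows "\<exists>\<mu>1\<in>S. finite {\<tau>. \<mu>1@\<tau> \<in> S} \<and> [] \<in> {\<tau>. \<mu>1@\<tau> \<in> S} \<and> (\<forall>\<tau>\<in>{\<tau>. \<mu>1@\<tau> \<in> S}. walk w \<tau> w)
     \<and> fmul (G u \<mu>1) (fsum S (\<lambda>\<mu>. fsmul (c \<mu>) (P u \<mu>))) \<approx>
         (fsum {\<tau>. \<mu>1@\<tau> \<in> S} (\<lambda>\<tau>. fsmul (c (\<mu>1@\<tau>)) (P w \<tau>)) :: ('v,'e,'k::field) el)"
proof -
  obtain \<mu>0 where "\<mu>0 \<in> S" using ne by blast
  then obtain \<mu>1 where m1: "\<mu>1 \<in> S" "\<forall>\<mu>. \<mu> \<in> S \<longrightarrow> length \<mu>1 \<le> length \<mu>"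
    using ex_has_least_nat[of "\<lambda>x. x \<in> S" \<mu>0 length] by blast
  have "{\<tau>. \<mu>1@\<tau> \<in> S} \<subseteq> drop (length \<mu>1) ` S"
  proof
    fix x assume "x \<in> {\<tau>. \<mu>1@\<tau> \<in> S}"
    thus "x \<in> drop (length \<mu>1) ` S" by (intro image_eqI[where x="\<mu>1@x"]) auto
  qed
  hence f: "finite {\<tau>. \<mu>1@\<tau> \<in> S}" using fin by (meson finite_imageI finite_subset)
  have w: "\<forall>\<tau>\<in>{\<tau>. \<mu>1@\<tau> \<in> S}. walk w \<tau> w" using W m1 walk_suffix by blast
  show ?thesis using m1 f w peel[OF fin W m1(1)] by (intro bexI[of _ \<mu>1]) auto
qed

end


lemma fsum_delta_f: "finite A \<Longrightarrow> f \<in> A \<Longrightarrow> fsum A (\<lambda>e. if e = f then g else fzero) = (g :: 'g list \<Rightarrow> 'k::field)"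
proof (rule ext)
  fix x assume A: "finite A" "f \<in> A"
  have "fsum A (\<lambda>e. if e = f then g else fzero) x = (\<Sum>e\<in>A. if e = f then g x else 0)"
    unfolding fsum_def fzero_def by (rule sum.cong) auto
  also have "\<dots> = g x" using A by (simp add: sum.delta')
  finally show "fsum A (\<lambda>e. if e = f then g else fzero) x = g x" .
qed

lemma fminus_self: "fminus a a = fzero" by (simp add: fdefs)
lemma fminus_fzero: "fminus a fzero = a" by (simp add: fdefs)
lemma fsum_fzero: "fsum A (\<lambda>_. fzero) = fzero" by (simp add: fdefs)

context cg begin

definition Fw :: "'v \<Rightarrow> 'e set" where "Fw w = {e\<in>E1. s e = w}"

lemma reg_fin: "w \<in> Reg E0 E1 s \<Longrightarrow> finite (Fw w) \<and> w \<in> E0"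
  by (simp add: Reg_def regular_vertex_def Fw_def)

definition q :: "'v \<Rightarrow> ('v,'e,'k::field) el" where
  "q w = fminus (V w) (fsum (Fw w) (\<lambda>e. fmul (Ee e) (Gg e)))"

lemma q_gap: "q w = gap_elem E1 s w" by (simp add: q_def gap_eq Fw_def)

context
  fixes w assumes wR: "w \<in> Reg E0 E1 s"
begin

lemma finF: "finite (Fw w)" and w0: "w \<in> E0" using reg_fin[OF wR] by auto

lemma FA_q: "q w \<in> FA E0 E1"
  unfolding q_def using finF w0
  by (intro FA_fminus FA_V FA_fsum FA_fmul FA_Ee FA_Gg) (auto simp: Fw_def)

lemma QE: assumes f: "f \<in> E1" "s f = w" shows "fmul (q w) (Ee f) \<approx> (fzero :: ('v,'e,'k::field) el)"
proof -
  have "fmul (q w) (Ee f) = (fminus (fmul (V w) (Ee f)) (fsum (Fw w) (\<lambda>e. fmul (Ee e) (fmul (Gg e) (Ee f)))) :: ('v,'e,'k) el)"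
    unfolding q_def by (simp add: fmul_fminus_left fmul_fsum_left fmul_assoc)
  also have "\<dots> \<approx> fminus (Ee f) (fsum (Fw w) (\<lambda>e. fmul (Ee e) (if e = f then V (r e) else fzero)))"
    using finF f R2[OF f(1)] by (intro eqv_minus eqv_fsum eqv_lmul R6 FA_Ee) (auto simp: Fw_def)
  also have "fsum (Fw w) (\<lambda>e. fmul (Ee e) (if e = f then V (r e) else fzero)) = fsum (Fw w) (\<lambda>e. if e = f then fmul (Ee f) (V (r f)) else (fzero :: ('v,'e,'k) el))"
    by (rule fsum_cong) (simp add: fmul_fzero_right)
  also have "\<dots> = fmul (Ee f) (V (r f))" using finF f by (intro fsum_delta_f) (auto simp: Fw_def)
  also have "fminus (Ee f) (fmul (Ee f) (V (r f))) \<approx> fminus (Ee f) (Ee f)"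
    by (intro eqv_minus eqv_refl R3 f)
  finally show ?thesis by (simp add: fminus_self)
qed

lemma QP: assumes "walk w \<tau> z" "\<tau> \<noteq> []" shows "fmul (q w) (P w \<tau>) \<approx> (fzero :: ('v,'e,'k::field) el)"
proof -
  obtain f \<tau>' where t: "\<tau> = f # \<tau>'" using assms(2) by (cases \<tau>) auto
  have f: "f \<in> E1" "s f = w" "walk (r f) \<tau>' z" using assms(1) t by auto
  have "fmul (q w) (P w \<tau>) = (fmul (fmul (q w) (Ee f)) (P (r f) \<tau>') :: ('v,'e,'k) el)"
    using t by (simp add: fmul_assoc)
  thus ?thesis using fmul_zero_eqv[OF QE[OF f(1,2)] FA_P[OF f(3)]] by simp
qed

lemma VQ: "fmul (V w) (q w) \<approx> (q w :: ('v,'e,'k::field) el)"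
proof -
  have "fmul (V w) (q w) = (fminus (fmul (V w) (V w)) (fsum (Fw w) (\<lambda>e. fmul (fmul (V w) (Ee e)) (Gg e))) :: ('v,'e,'k) el)"
    unfolding q_def by (simp add: fmul_fminus_right fmul_fsum_right fmul_assoc)
  also have "\<dots> \<approx> q w"
    unfolding q_def using finF w0
    by (intro eqv_minus eqv_fsum R1' eqv_rmul FA_Gg) (auto simp: Fw_def intro: R2[of _, simplified])
  finally show ?thesis .
qed

lemma QV: "fmul (q w) (V w) \<approx> (q w :: ('v,'e,'k::field) el)"
proof -
  have "fmul (q w) (V w) = (fminus (fmul (V w) (V w)) (fsum (Fw w) (\<lambda>e. fmul (Ee e) (fmul (Gg e) (V w)))) :: ('v,'e,'k) el)"
    unfolding q_def by (simp add: fmul_fminus_left fmul_fsum_left fmul_assoc)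
  also have "\<dots> \<approx> q w"
    unfolding q_def using finF w0
    by (intro eqv_minus eqv_fsum R1' eqv_lmul FA_Ee) (auto simp: Fw_def intro: R5[of _, simplified])
  finally show ?thesis .
qed

lemma QQ: "fmul (q w) (q w) \<approx> (q w :: ('v,'e,'k::field) el)"
proof -
  have "fmul (q w) (q w) = (fminus (fmul (q w) (V w)) (fsum (Fw w) (\<lambda>e. fmul (fmul (q w) (Ee e)) (Gg e))) :: ('v,'e,'k) el)"
    unfolding q_def[of w] by (simp add: fmul_fminus_right fmul_fsum_right fmul_assoc q_def)
  also have "\<dots> \<approx> fminus (q w) (fsum (Fw w) (\<lambda>e. fzero))"
    using finF by (intro eqv_minus eqv_fsum QV fmul_zero_eqv QE FA_Gg) (auto simp: Fw_def)
  finally show ?thesis by (simp add: fsum_fzero fminus_fzero)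
qed

end
end


locale cgp = cg E0 E1 r s X
  for E0 :: "'v set" and E1 :: "'e set" and r s :: "'e \<Rightarrow> 'v" and X :: "'v set" +
  fixes \<pi> :: "(('v, 'e) gen list \<Rightarrow> 'k::field) set \<Rightarrow> 'a::ring"
  assumes hom: "cohn_ring_hom E0 E1 r s X \<pi>"
    and L: "condition_L E1 r s"
    and nzV: "\<forall>u \<in> E0. \<pi> (cls E0 E1 r s X (fgen (Vx u))) \<noteq> 0"
    and nzY: "\<forall>v \<in> Reg E0 E1 s - X. \<pi> (cls E0 E1 r s X (gap_elem E1 s v)) \<noteq> 0"
begin

definition phi :: "('v,'e,'k) el \<Rightarrow> 'a" where "phi x = \<pi> (cls E0 E1 r s X x)"

lemma phi_add: "x \<in> FA E0 E1 \<Longrightarrow> y \<in> FA E0 E1 \<Longrightarrow> phi (fadd x y) = phi x + phi y"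
  using hom unfolding cohn_ring_hom_def phi_def by blast

lemma phi_mul: "x \<in> FA E0 E1 \<Longrightarrow> y \<in> FA E0 E1 \<Longrightarrow> phi (fmul x y) = phi x * phi y"
  using hom unfolding cohn_ring_hom_def phi_def by blast

lemma cls_eq: "(a :: ('v,'e,'k) el) \<approx> b \<Longrightarrow> cls E0 E1 r s X a = cls E0 E1 r s X b"
proof -
  assume ab: "a \<approx> b"
  have "y \<approx> a \<longleftrightarrow> y \<approx> b" for y :: "('v,'e,'k) el"
    using ab eqv_trans eqv_sym by blast
  thus ?thesis unfolding cls_def eqv_def by auto
qed

lemma phi_eqv: "(a :: ('v,'e,'k) el) \<approx> b \<Longrightarrow> phi a = phi b"
  unfolding phi_def using cls_eq by simp

lemma phi_zero: "phi fzero = 0"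
proof -
  have "phi (fadd fzero fzero) = phi fzero + phi fzero" using phi_add FA_fzero by blast
  moreover have "fadd fzero fzero = (fzero :: ('v,'e,'k) el)" by (simp add: fdefs)
  ultimately show ?thesis by simp
qed

lemma phi_eqv0: "(a :: ('v,'e,'k) el) \<approx> fzero \<Longrightarrow> phi a = 0"
  using phi_eqv phi_zero by simp

lemma phi_sm:
  assumes "phi (fsmul k a) = 0" "k \<noteq> 0" "a \<in> FA E0 E1" "v \<in> E0" "fmul (V v) a \<approx> a"
  shows "phi a = 0"
proof -
  have "fmul (fsmul (inverse k) (V v)) (fsmul k a) = fmul (V v) a"
    using assms(2) by (simp only: fmul_fsmul_left fmul_fsmul_right) (simp add: fsmul_def mult.assoc[symmetric])
  hence "phi (fmul (V v) a) = phi (fsmul (inverse k) (V v)) * phi (fsmul k a)"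
    using phi_mul[of "fsmul (inverse k) (V v)" "fsmul k a"] assms FA_fsmul FA_V by metis
  hence "phi (fmul (V v) a) = 0" using assms(1) by simp
  thus ?thesis using phi_eqv[OF assms(5)] by simp
qed

lemma phiV: "v \<in> E0 \<Longrightarrow> phi (V v) \<noteq> 0"
  using nzV by (simp add: phi_def V_def fgen_dl)

lemma phiq: "v \<in> Reg E0 E1 s \<Longrightarrow> v \<notin> X \<Longrightarrow> phi (q v) \<noteq> 0"
  using nzY by (simp add: phi_def q_gap)

lemma restrict_nz: "fsum S (\<lambda>\<mu>. fsmul (c \<mu>) (F \<mu>)) = fsum {\<mu>\<in>S. c \<mu> \<noteq> 0} (\<lambda>\<mu>. fsmul (c \<mu>) (F \<mu>))"
  if "finite S" for F :: "'i \<Rightarrow> ('v,'e,'k) el"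
  unfolding fsum_def fsmul_def using that by (intro ext sum.mono_neutral_right) auto

lemma GF:
  assumes fin: "finite S" and W: "\<And>\<mu>. \<mu> \<in> S \<Longrightarrow> walk u \<mu> w"
    and ph: "phi (fsum S (\<lambda>\<mu>. fsmul (c \<mu>) (P u \<mu>))) = 0"
  shows "\<forall>\<mu>\<in>S. c \<mu> = 0"
proof (rule ccontr)
  define S' where "S' = {\<mu>\<in>S. c \<mu> \<noteq> 0}"
  assume "\<not> (\<forall>\<mu>\<in>S. c \<mu> = 0)"
  hence ne: "S' \<noteq> {}" by (auto simp: S'_def)
  have fin': "finite S'" using fin by (simp add: S'_def)
  have W': "\<And>\<mu>. \<mu> \<in> S' \<Longrightarrow> walk u \<mu> w" using W by (simp add: S'_def)
  define y where "y = fsum S' (\<lambda>\<mu>. fsmul (c \<mu>) (P u \<mu>))"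
  have phy: "phi y = 0" using ph restrict_nz[OF fin] by (simp add: y_def S'_def)
  have FAy: "y \<in> FA E0 E1" unfolding y_def using fin' W' by (intro FA_fsum FA_fsmul FA_P) auto
  obtain \<mu>1 where m1: "\<mu>1 \<in> S'" "finite {\<tau>. \<mu>1@\<tau> \<in> S'}" "[] \<in> {\<tau>. \<mu>1@\<tau> \<in> S'}"
     "\<forall>\<tau>\<in>{\<tau>. \<mu>1@\<tau> \<in> S'}. walk w \<tau> w"
     "fmul (G u \<mu>1) y \<approx> fsum {\<tau>. \<mu>1@\<tau> \<in> S'} (\<lambda>\<tau>. fsmul (c (\<mu>1@\<tau>)) (P w \<tau>))"
    using peel_min[OF fin' W' ne, of c] unfolding y_def by blast
  define T0 where "T0 = {\<tau>. \<mu>1@\<tau> \<in> S'}"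
  have w0: "w \<in> E0" using W'[OF m1(1)] walk_E0 by blast
  obtain lam z where lam: "walk w lam z" "\<forall>\<tau>\<in>T0 - {[]}. take (length lam) (\<tau>@lam) \<noteq> lam"
    using lam_exists[OF L w0, of "T0 - {[]}"] m1(2,4) unfolding T0_def by blast
  have sw: "fmul (G w lam) (fmul (fsum T0 (\<lambda>\<tau>. fsmul (c (\<mu>1@\<tau>)) (P w \<tau>))) (P w lam)) \<approx> fsmul (c (\<mu>1@[])) (V z)"
  proof (rule sandwich)
    show "finite T0" "[] \<in> T0" using m1 by (auto simp: T0_def)
    show "G w lam \<in> FA E0 E1" "P w lam \<in> FA E0 E1" using FA_G FA_P lam(1) by auto
  next
    fix \<tau> assume t: "\<tau> \<in> T0" "\<tau> \<noteq> []"
    have wt: "walk w \<tau> w" using t m1(4) by (auto simp: T0_def)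
    have "fmul (G w lam) (fmul (P w \<tau>) (P w lam)) \<approx> (fmul (G w lam) (P w (\<tau>@lam)) :: ('v,'e,'k) el)"
      by (intro eqv_lmul FA_G[OF lam(1)] PP[OF wt lam(1)])
    also have "\<dots> \<approx> gp z z lam (\<tau>@lam)"
      using wt lam(1) by (intro GP) (auto simp: walk_append)
    also have "\<dots> = fzero"
    proof -
      have "take (length (\<tau>@lam)) lam \<noteq> \<tau>@lam" using t(2) by simp
      thus ?thesis using lam(2) t by (simp add: gp_def)
    qed
    finally show "fmul (G w lam) (fmul (P w \<tau>) (P w lam)) \<approx> (fzero :: ('v,'e,'k) el)" .
  next
    have "fmul (G w lam) (fmul (P w []) (P w lam)) \<approx> (fmul (G w lam) (P w lam) :: ('v,'e,'k) el)"
      using VP[OF lam(1)] by (intro eqv_lmul FA_G[OF lam(1)]) simp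
    also have "\<dots> \<approx> gp z z lam lam" by (rule GP[OF lam(1) lam(1)])
    also have "\<dots> = V z" by (simp add: gp_def)
    finally show "fmul (G w lam) (fmul (P w []) (P w lam)) \<approx> (V z :: ('v,'e,'k) el)" .
  qed
  have FAG1: "G u \<mu>1 \<in> FA E0 E1" using FA_G W'[OF m1(1)] by blast
  have E: "fmul (G w lam) (fmul (fmul (G u \<mu>1) y) (P w lam)) \<approx> fsmul (c \<mu>1) (V z)"
  proof -
    have "fmul (G w lam) (fmul (fmul (G u \<mu>1) y) (P w lam)) \<approx> fmul (G w lam) (fmul (fsum T0 (\<lambda>\<tau>. fsmul (c (\<mu>1@\<tau>)) (P w \<tau>))) (P w lam))"
      using m1(5) lam(1) unfolding T0_def by (intro eqv_lmul eqv_rmul FA_G FA_P) auto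
    thus ?thesis using sw eqv_trans by simp
  qed
  have "phi (fmul (G w lam) (fmul (fmul (G u \<mu>1) y) (P w lam))) = phi (G w lam) * (phi (G u \<mu>1) * phi y * phi (P w lam))"
  proof -
    have 1: "fmul (G u \<mu>1) y \<in> FA E0 E1" using FAG1 FAy by (rule FA_fmul)
    have 2: "fmul (fmul (G u \<mu>1) y) (P w lam) \<in> FA E0 E1" using 1 FA_P[OF lam(1)] by (rule FA_fmul)
    show ?thesis using phi_mul[OF FA_G[OF lam(1)] 2] phi_mul[OF 1 FA_P[OF lam(1)]] phi_mul[OF FAG1 FAy] by simp
  qed
  hence "phi (fsmul (c \<mu>1) (V z)) = 0" using phy phi_eqv[OF E] by simp
  moreover have z0: "z \<in> E0" using walk_E0[OF lam(1)] by simp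
  moreover have "c \<mu>1 \<noteq> 0" using m1(1) by (simp add: S'_def)
  ultimately have "phi (V z) = 0" using phi_sm FA_V R1' by blast
  thus False using phiV z0 by simp
qed

end


context cgp begin

lemma QL:
  assumes wR: "w \<in> Reg E0 E1 s" and wX: "w \<notin> X"
    and fin: "finite S" and W: "\<And>\<mu>. \<mu> \<in> S \<Longrightarrow> walk u \<mu> w"
    and ph: "phi (fmul (fsum S (\<lambda>\<mu>. fsmul (c \<mu>) (P u \<mu>))) (q w)) = 0"
  shows "\<forall>\<mu>\<in>S. c \<mu> = 0"
proof (rule ccontr)
  define S' where "S' = {\<mu>\<in>S. c \<mu> \<noteq> 0}"
  assume "\<not> (\<forall>\<mu>\<in>S. c \<mu> = 0)"
  hence ne: "S' \<noteq> {}" by (auto simp: S'_def)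
  have fin': "finite S'" using fin by (simp add: S'_def)
  have W': "\<And>\<mu>. \<mu> \<in> S' \<Longrightarrow> walk u \<mu> w" using W by (simp add: S'_def)
  define y where "y = fsum S' (\<lambda>\<mu>. fsmul (c \<mu>) (P u \<mu>))"
  have phy: "phi (fmul y (q w)) = 0" using ph restrict_nz[OF fin] by (simp add: y_def S'_def)
  have FAy: "y \<in> FA E0 E1" unfolding y_def using fin' W' by (intro FA_fsum FA_fsmul FA_P) auto
  have FAq: "q w \<in> FA E0 E1" using FA_q[OF wR] .
  obtain \<mu>1 where m1: "\<mu>1 \<in> S'" "finite {\<tau>. \<mu>1@\<tau> \<in> S'}" "[] \<in> {\<tau>. \<mu>1@\<tau> \<in> S'}"
     "\<forall>\<tau>\<in>{\<tau>. \<mu>1@\<tau> \<in> S'}. walk w \<tau> w"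
     "fmul (G u \<mu>1) y \<approx> fsum {\<tau>. \<mu>1@\<tau> \<in> S'} (\<lambda>\<tau>. fsmul (c (\<mu>1@\<tau>)) (P w \<tau>))"
    using peel_min[OF fin' W' ne, of c] unfolding y_def by blast
  define T0 where "T0 = {\<tau>. \<mu>1@\<tau> \<in> S'}"
  have sw: "fmul (q w) (fmul (fsum T0 (\<lambda>\<tau>. fsmul (c (\<mu>1@\<tau>)) (P w \<tau>))) (q w)) \<approx> fsmul (c (\<mu>1@[])) (q w)"
  proof (rule sandwich)
    show "finite T0" "[] \<in> T0" using m1 by (auto simp: T0_def)
    show "q w \<in> FA E0 E1" "q w \<in> FA E0 E1" using FAq by auto
  next
    fix \<tau> assume t: "\<tau> \<in> T0" "\<tau> \<noteq> []"
    have wt: "walk w \<tau> w" using t m1(4) by (auto simp: T0_def)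
    have "fmul (q w) (fmul (P w \<tau>) (q w)) = (fmul (fmul (q w) (P w \<tau>)) (q w) :: ('v,'e,'k) el)"
      by (simp add: fmul_assoc)
    also have "\<dots> \<approx> fzero" by (rule fmul_zero_eqv[OF QP[OF wR wt t(2)] FAq])
    finally show "fmul (q w) (fmul (P w \<tau>) (q w)) \<approx> (fzero :: ('v,'e,'k) el)" .
  next
    have "fmul (q w) (fmul (P w []) (q w)) \<approx> (fmul (q w) (q w) :: ('v,'e,'k) el)"
      using VQ[OF wR] by (intro eqv_lmul FAq) simp
    also have "\<dots> \<approx> q w" by (rule QQ[OF wR])
    finally show "fmul (q w) (fmul (P w []) (q w)) \<approx> (q w :: ('v,'e,'k) el)" .
  qed
  have FAG1: "G u \<mu>1 \<in> FA E0 E1" using FA_G W'[OF m1(1)] by blast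
  have E: "fmul (q w) (fmul (fmul (G u \<mu>1) y) (q w)) \<approx> fsmul (c \<mu>1) (q w)"
  proof -
    have "fmul (q w) (fmul (fmul (G u \<mu>1) y) (q w)) \<approx> fmul (q w) (fmul (fsum T0 (\<lambda>\<tau>. fsmul (c (\<mu>1@\<tau>)) (P w \<tau>))) (q w))"
      using m1(5) unfolding T0_def by (intro eqv_lmul eqv_rmul FAq)
    thus ?thesis using sw eqv_trans by simp
  qed
  have "phi (fmul (q w) (fmul (fmul (G u \<mu>1) y) (q w))) = phi (q w) * (phi (G u \<mu>1) * phi (fmul y (q w)))"
  proof -
    have 1: "fmul y (q w) \<in> FA E0 E1" using FAy FAq by (rule FA_fmul)
    have 2: "fmul (G u \<mu>1) (fmul y (q w)) \<in> FA E0 E1" using FAG1 1 by (rule FA_fmul)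
    have "fmul (q w) (fmul (fmul (G u \<mu>1) y) (q w)) = fmul (q w) (fmul (G u \<mu>1) (fmul y (q w)))"
      by (simp add: fmul_assoc)
    thus ?thesis using phi_mul[OF FAq 2] phi_mul[OF FAG1 1] by simp
  qed
  hence "phi (fsmul (c \<mu>1) (q w)) = 0" using phy phi_eqv[OF E] by simp
  moreover have "c \<mu>1 \<noteq> 0" using m1(1) by (simp add: S'_def)
  ultimately have "phi (q w) = 0" using phi_sm FAq VQ[OF wR] reg_fin[OF wR] by blast
  thus False using phiq[OF wR wX] by simp
qed

end


context cg begin

lemma T1: assumes "valid (u, m, w, [])" "e \<in> E1" "s e = w"
  shows "fmul (trm (u, m, w, [])) (Ee e) \<approx> (trm (u, m@[e], r e, []) :: ('v,'e,'k::field) el)"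
proof -
  have wm: "walk u m w" using assms(1) by auto
  have w0: "w \<in> E0" using walk_E0[OF wm] by simp
  have wf: "walk w [e] (r e)" using assms r_E0 by simp
  have "fmul (trm (u, m, w, [])) (Ee e) = (fmul (P u m) (fmul (V (s e)) (Ee e)) :: ('v,'e,'k) el)"
    using assms(3) by (simp add: fmul_assoc)
  also have "\<dots> \<approx> fmul (P u m) (Ee e)" by (intro eqv_lmul FA_P[OF wm] R2 assms(2))
  also have "\<dots> \<approx> fmul (P u m) (P w [e])"
    using eqv_sym[OF R3[OF assms(2)]] by (intro eqv_lmul FA_P[OF wm]) simp
  also have "\<dots> \<approx> P u (m@[e])" using PP[OF wm wf] .
  also have "\<dots> \<approx> fmul (P u (m@[e])) (V (r e))"
    by (rule eqv_sym, rule PV[of u "m@[e]" "r e"]) (use wm wf in \<open>auto simp: walk_append\<close>)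
  also have "\<dots> = trm (u, m@[e], r e, [])" by simp
  finally show ?thesis .
qed

lemma T2: assumes "valid (u, m, w, e#n)"
  shows "fmul (trm (u, m, w, e#n)) (Ee e) \<approx> (trm (u, m, r e, n) :: ('v,'e,'k::field) el)"
proof -
  obtain z where wm: "walk u m z" and wn: "walk w (e#n) z" using assms by auto
  have e: "e \<in> E1" "walk (r e) n z" using wn by auto
  have "fmul (trm (u, m, w, e#n)) (Ee e) = (fmul (P u m) (fmul (G (r e) n) (fmul (Gg e) (Ee e))) :: ('v,'e,'k) el)"
    by (simp add: fmul_assoc)
  also have "\<dots> \<approx> fmul (P u m) (fmul (G (r e) n) (V (r e)))"
    using R6[OF e(1) e(1)] by (intro eqv_lmul FA_P[OF wm] FA_G[OF e(2)]) simp
  also have "\<dots> \<approx> fmul (P u m) (G (r e) n)" by (intro eqv_lmul FA_P[OF wm] GV[OF e(2)])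
  finally show ?thesis by simp
qed

lemma T3: assumes "valid (u, m, w, f#n)" "e \<in> E1" "f \<noteq> e"
  shows "fmul (trm (u, m, w, f#n)) (Ee e) \<approx> (fzero :: ('v,'e,'k::field) el)"
proof -
  obtain z where wm: "walk u m z" and wn: "walk w (f#n) z" using assms by auto
  have f: "f \<in> E1" "walk (r f) n z" using wn by auto
  have "fmul (trm (u, m, w, f#n)) (Ee e) = (fmul (P u m) (fmul (G (r f) n) (fmul (Gg f) (Ee e))) :: ('v,'e,'k) el)"
    by (simp add: fmul_assoc)
  also have "\<dots> \<approx> fmul (P u m) (fmul (G (r f) n) fzero)"
    using R6[OF f(1) assms(2)] assms(3) by (intro eqv_lmul FA_P[OF wm] FA_G[OF f(2)]) simp
  finally show ?thesis by (simp add: fmul_fzero_right)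
qed

lemma T4: assumes "valid (u, m, w, n)"
  shows "fmul (trm (u, m, w, n)) (V w) \<approx> (trm (u, m, w, n) :: ('v,'e,'k::field) el)"
proof -
  obtain z where wm: "walk u m z" and wn: "walk w n z" using assms by auto
  have "fmul (trm (u, m, w, n)) (V w) = (fmul (P u m) (fmul (G w n) (V w)) :: ('v,'e,'k) el)"
    by (simp add: fmul_assoc)
  also have "\<dots> \<approx> fmul (P u m) (G w n)" by (intro eqv_lmul FA_P[OF wm] GV[OF wn])
  finally show ?thesis by simp
qed

lemma T4': assumes "valid (u, m, w, n)" "v \<in> E0" "v \<noteq> w"
  shows "fmul (trm (u, m, w, n)) (V v) \<approx> (fzero :: ('v,'e,'k::field) el)"
proof -
  obtain z where wm: "walk u m z" and wn: "walk w n z" using assms by auto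
  have "fmul (trm (u, m, w, n)) (V v) = (fmul (P u m) (fmul (G w n) (V v)) :: ('v,'e,'k) el)"
    by (simp add: fmul_assoc)
  also have "\<dots> \<approx> fmul (P u m) fzero" by (intro eqv_lmul FA_P[OF wm] G_V_ne[OF wn assms(2,3)])
  finally show ?thesis by (simp add: fmul_fzero_right)
qed

lemma T5: assumes "valid (u, m, w, n)"
  shows "fmul (V u) (trm (u, m, w, n)) \<approx> (trm (u, m, w, n) :: ('v,'e,'k::field) el)"
proof -
  obtain z where wm: "walk u m z" and wn: "walk w n z" using assms by auto
  have "fmul (V u) (trm (u, m, w, n)) = (fmul (fmul (V u) (P u m)) (G w n) :: ('v,'e,'k) el)"
    by (simp add: fmul_assoc)
  also have "\<dots> \<approx> fmul (P u m) (G w n)" by (intro eqv_rmul FA_G[OF wn] VP[OF wm])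
  finally show ?thesis by simp
qed

lemma T5': assumes "valid (u, m, w, n)" "v \<in> E0" "v \<noteq> u"
  shows "fmul (V v) (trm (u, m, w, n)) \<approx> (fzero :: ('v,'e,'k::field) el)"
proof -
  obtain z where wm: "walk u m z" and wn: "walk w n z" using assms by auto
  have "fmul (V v) (trm (u, m, w, n)) = (fmul (fmul (V v) (P u m)) (G w n) :: ('v,'e,'k) el)"
    by (simp add: fmul_assoc)
  also have "\<dots> \<approx> fmul fzero (G w n)" by (intro eqv_rmul FA_G[OF wn] V_P_ne[OF wm assms(2,3)])
  finally show ?thesis by (simp add: fmul_fzero_left)
qed

lemma TEG: assumes "valid (u, m, w, e#n)"
  shows "trm (u, m, w, e#n) \<approx> (fmul (fmul (trm (u, m, w, e#n)) (Ee e)) (Gg e) :: ('v,'e,'k::field) el)"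
proof -
  have e: "e \<in> E1" using assms by auto
  have "fmul (fmul (trm (u, m, w, e#n)) (Ee e)) (Gg e) \<approx> (fmul (trm (u, m, r e, n)) (Gg e) :: ('v,'e,'k) el)"
    by (intro eqv_rmul FA_Gg e T2 assms)
  also have "\<dots> = trm (u, m, w, e#n)" by (simp add: fmul_assoc)
  finally show ?thesis by (rule eqv_sym)
qed

lemma regroup:
  assumes "finite D"
  shows "fsum D (\<lambda>i. fsmul (c i) (F (g i))) = fsum (g ` D) (\<lambda>j. fsmul (\<Sum>i\<in>{i\<in>D. g i = j}. c i) (F j))"
  unfolding fsum_def fsmul_def
proof (rule ext)
  fix x
  have "(\<Sum>i\<in>D. c i * F (g i) x) = (\<Sum>j\<in>g ` D. \<Sum>i\<in>{i\<in>D. g i = j}. c i * F (g i) x)"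
    by (rule sum.image_gen[OF assms])
  also have "\<dots> = (\<Sum>j\<in>g ` D. (\<Sum>i\<in>{i\<in>D. g i = j}. c i) * F j x)"
    by (rule sum.cong) (auto simp: sum_distrib_right)
  finally show "(\<Sum>i\<in>D. c i * F (g i) x) = (\<Sum>j\<in>g ` D. (\<Sum>i\<in>{i\<in>D. g i = j}. c i) * F j x)" .
qed

lemma ev_zero: "(\<And>t. t \<in> S \<Longrightarrow> c t = 0) \<Longrightarrow> ev S c = (fzero :: ('v,'e,'k::field) el)"
  unfolding ev_def fsum_def fsmul_def fzero_def by simp

lemma FA_ev: "finite S \<Longrightarrow> (\<And>t. t \<in> S \<Longrightarrow> valid t) \<Longrightarrow> ev S c \<in> FA E0 E1"
  unfolding ev_def by (intro FA_fsum FA_fsmul FA_trm) auto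

lemma ev_split: "finite S \<Longrightarrow> ev S c = fadd (ev {t\<in>S. Q t} c) (ev {t\<in>S. \<not> Q t} c)"
proof -
  assume fin: "finite S"
  have S: "S = {t\<in>S. Q t} \<union> {t\<in>S. \<not> Q t}" by auto
  show ?thesis unfolding ev_def fsum_def fadd_def
  proof (rule ext)
    fix x
    have "(\<Sum>t\<in>S. fsmul (c t) (trm t) x) = (\<Sum>t\<in>{t\<in>S. Q t} \<union> {t\<in>S. \<not> Q t}. fsmul (c t) (trm t) x)"
      using S by simp
    also have "\<dots> = (\<Sum>t\<in>{t\<in>S. Q t}. fsmul (c t) (trm t) x) + (\<Sum>t\<in>{t\<in>S. \<not> Q t}. fsmul (c t) (trm t) x)"
      using fin by (intro sum.union_disjoint) auto
    finally show "(\<Sum>t\<in>S. fsmul (c t) (trm t) x) = (\<Sum>t\<in>{t\<in>S. Q t}. fsmul (c t) (trm t) x) + (\<Sum>t\<in>{t\<in>S. \<not> Q t}. fsmul (c t) (trm t) x)" .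
  qed
qed

end


context cg begin

definition gn :: "'v \<times> 'e list \<times> 'v \<times> 'e list \<Rightarrow> 'e list" where "gn t = snd (snd (snd t))"
definition pm :: "'v \<times> 'e list \<times> 'v \<times> 'e list \<Rightarrow> 'e list" where "pm t = fst (snd t)"

definition blk :: "'v \<Rightarrow> 'v \<Rightarrow> nat \<Rightarrow> ('v \<times> 'e list \<times> 'v \<times> 'e list) set \<Rightarrow> bool" where
  "blk u w m S \<longleftrightarrow> finite S \<and> (\<forall>t\<in>S. valid t \<and> fst t = u \<and> fst (snd (snd t)) = w \<and> length (gn t) \<le> m)"

lemma blkD: "blk u w m S \<Longrightarrow> t \<in> S \<Longrightarrow> t = (u, pm t, w, gn t) \<and> valid t \<and> length (gn t) \<le> m"
  unfolding blk_def gn_def pm_def by (cases t) auto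

lemma blk_fin: "blk u w m S \<Longrightarrow> finite S" by (simp add: blk_def)

lemma blk_sub: "blk u w m S \<Longrightarrow> S' \<subseteq> S \<Longrightarrow> blk u w m S'"
  unfolding blk_def by (auto intro: finite_subset)

lemma FA_blk: "blk u w m S \<Longrightarrow> ev S c \<in> FA E0 E1"
  by (intro FA_ev) (auto simp: blk_def)

lemma fsmul_fzero: "fsmul k fzero = fzero" by (simp add: fdefs)

lemma xE:
  assumes B: "blk u w m S" and e: "e \<in> E1" "s e = w"
  shows "\<exists>S' c'. blk u (r e) (m - 1) S' \<and> fmul (ev S c) (Ee e) \<approx> (ev S' c' :: ('v,'e,'k::field) el)"
proof -
  have fin: "finite S" using blk_fin[OF B] .
  define D where "D = {t\<in>S. gn t = [] \<or> hd (gn t) = e}"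
  define g where "g t = (u, if gn t = [] then pm t @ [e] else pm t, r e, tl (gn t))" for t
  have "fmul (ev S c) (Ee e) = (fsum S (\<lambda>t. fsmul (c t) (fmul (trm t) (Ee e))) :: ('v,'e,'k) el)"
    unfolding ev_def by (simp add: fmul_fsum_left fmul_fsmul_left)
  also have "\<dots> \<approx> fsum S (\<lambda>t. if t \<in> D then fsmul (c t) (trm (g t)) else fzero)"
  proof (rule eqv_fsum[OF fin])
    fix t assume tS: "t \<in> S"
    obtain \<mu> \<nu> where tt: "t = (u, \<mu>, w, \<nu>)" using blkD[OF B tS] by metis
    have vt: "valid (u, \<mu>, w, \<nu>)" using blkD[OF B tS] tt by simp
    show "fsmul (c t) (fmul (trm t) (Ee e)) \<approx> (if t \<in> D then fsmul (c t) (trm (g t)) else fzero)"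
    proof (cases \<nu>)
      case Nil
      have "fmul (trm t) (Ee e) \<approx> (trm (g t) :: ('v,'e,'k) el)"
        using T1[of u \<mu> w e] vt Nil e by (simp add: tt g_def gn_def pm_def)
      thus ?thesis using Nil tS tt by (simp add: D_def gn_def eqv_smul)
    next
      case (Cons f n)
      show ?thesis
      proof (cases "f = e")
        case True
        have "fmul (trm t) (Ee e) \<approx> (trm (g t) :: ('v,'e,'k) el)"
          using T2[of u \<mu> w e n] vt Cons True by (simp add: tt g_def gn_def pm_def)
        thus ?thesis using Cons True tS tt by (simp add: D_def gn_def eqv_smul)
      next
        case False
        have "fmul (trm t) (Ee e) \<approx> (fzero :: ('v,'e,'k) el)"
          using T3[of u \<mu> w f n e] vt Cons False e by (simp add: tt)
        hence "fsmul (c t) (fmul (trm t) (Ee e)) \<approx> (fsmul (c t) fzero :: ('v,'e,'k) el)" by (rule eqv_smul)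
        thus ?thesis using Cons False tt by (simp add: D_def gn_def fsmul_fzero)
      qed
    qed
  qed
  also have "\<dots> = fsum D (\<lambda>t. fsmul (c t) (trm (g t)))"
    unfolding D_def by (subst fsum_filter_if[OF fin, symmetric]) (rule fsum_cong, auto)
  also have "\<dots> = ev (g ` D) (\<lambda>j. \<Sum>i\<in>{i\<in>D. g i = j}. c i)"
    unfolding ev_def by (rule regroup) (simp add: D_def fin)
  finally have eq: "fmul (ev S c) (Ee e) \<approx> (ev (g ` D) (\<lambda>j. \<Sum>i\<in>{i\<in>D. g i = j}. c i) :: ('v,'e,'k) el)" .
  have "blk u (r e) (m - 1) (g ` D)"
    unfolding blk_def
  proof (rule conjI[OF _ ballI])
    show "finite (g ` D)" using fin by (simp add: D_def)
  next
    fix t' assume "t' \<in> g ` D"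
    then obtain t where tD: "t \<in> D" and t': "t' = g t" by blast
    have tS: "t \<in> S" using tD by (simp add: D_def)
    have t: "t = (u, pm t, w, gn t)" "valid t" "length (gn t) \<le> m" using blkD[OF B tS] by auto
    obtain z where wm: "walk u (pm t) z" and wn: "walk w (gn t) z" using t(1,2) by (metis valid.simps)
    show "valid t' \<and> fst t' = u \<and> fst (snd (snd t')) = r e \<and> length (gn t') \<le> m - 1"
    proof (cases "gn t")
      case Nil
      hence "z = w" using wn by simp
      thus ?thesis using Nil t' wm e r_E0 by (auto simp: g_def gn_def walk_append)
    next
      case (Cons f n)
      hence "f = e" using tD by (simp add: D_def)
      thus ?thesis using Cons t' wm wn t(3) by (auto simp: g_def gn_def)
    qed
  qed
  thus ?thesis using eq by blast
qed

end


context cg begin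

lemma neg_lemma: "fadd a b \<approx> (fzero :: ('v,'e,'k::field) el) \<Longrightarrow> b \<approx> fsmul (-1) a"
proof -
  assume h: "fadd a b \<approx> (fzero :: ('v,'e,'k::field) el)"
  have "b = fminus (fadd a b) a" by (simp add: fdefs)
  also have "\<dots> \<approx> fminus fzero a" by (rule eqv_minus[OF h eqv_refl])
  also have "fminus fzero a = fsmul (-1) a" by (simp add: fdefs)
  finally show ?thesis .
qed

lemma blk_get: assumes "blk u w m S" "t \<in> S" obtains \<mu> \<nu> where "t = (u, \<mu>, w, \<nu>)" "valid (u, \<mu>, w, \<nu>)"
  using blkD[OF assms] by (metis)

lemma P4:
  assumes B: "blk u w m S" and w0: "w \<in> E0" and finF: "finite F'" and FF: "F' \<subseteq> Fw w"
    and hdF: "\<forall>t\<in>S. gn t \<noteq> [] \<longrightarrow> hd (gn t) \<in> F'"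
    and xz: "\<forall>e\<in>F'. fmul (ev S c) (Ee e) \<approx> (fzero :: ('v,'e,'k::field) el)"
  shows "ev S c \<approx> (fmul (ev {t\<in>S. gn t = []} c) (fminus (V w) (fsum F' (\<lambda>e. fmul (Ee e) (Gg e)))) :: ('v,'e,'k) el)"
proof -
  have fin: "finite S" using blk_fin[OF B] .
  define S0 where "S0 = {t\<in>S. gn t = []}"
  define S1 where "S1 = {t\<in>S. \<not> gn t = []}"
  define Se where "Se e = {t. t \<in> S1 \<and> hd (gn t) = e}" for e
  define x0 :: "('v,'e,'k) el" where "x0 = ev S0 c"
  define xe :: "'e \<Rightarrow> ('v,'e,'k) el" where "xe e = ev (Se e) c" for e
  have Fe: "e \<in> E1 \<and> s e = w" if "e \<in> F'" for e using FF that by (auto simp: Fw_def)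
  have BS0: "blk u w m S0" using blk_sub[OF B] by (simp add: S0_def)
  have BSe: "blk u w m (Se e)" for e using blk_sub[OF B] by (auto simp: Se_def S1_def)
  have FAx0: "x0 \<in> FA E0 E1" unfolding x0_def by (rule FA_blk[OF BS0])
  have FAxe: "xe e \<in> FA E0 E1" for e unfolding xe_def by (rule FA_blk[OF BSe])
  have A: "ev S c = fadd x0 (fsum F' xe)"
  proof -
    have "ev S c = fadd x0 (ev S1 c)" unfolding x0_def S0_def S1_def by (rule ev_split[OF fin])
    moreover have "ev S1 c = fsum F' xe"
      unfolding ev_def fsum_def xe_def Se_def
    proof (rule ext)
      fix x
      have "(\<lambda>t. hd (gn t)) ` S1 \<subseteq> F'" using hdF by (auto simp: S1_def)
      moreover have "finite S1" using fin by (simp add: S1_def)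
      ultimately show "(\<Sum>t\<in>S1. fsmul (c t) (trm t) x) = (\<Sum>e\<in>F'. \<Sum>t\<in>{t. t \<in> S1 \<and> hd (gn t) = e}. fsmul (c t) (trm t) x)"
        using finF by (simp add: sum.group)
    qed
    ultimately show ?thesis by simp
  qed
  have D: "fadd (fmul x0 (Ee e)) (fmul (xe e) (Ee e)) \<approx> fzero" if eF: "e \<in> F'" for e
  proof -
    have "fmul (ev S c) (Ee e) = fadd (fmul x0 (Ee e)) (fsum F' (\<lambda>f. fmul (xe f) (Ee e)))"
      unfolding A by (simp add: fmul_fadd_left fmul_fsum_left)
    also have "\<dots> \<approx> fadd (fmul x0 (Ee e)) (fsum F' (\<lambda>f. if f = e then fmul (xe e) (Ee e) else fzero))"
    proof (intro eqv_add eqv_refl eqv_fsum[OF finF])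
      fix f assume "f \<in> F'"
      show "fmul (xe f) (Ee e) \<approx> (if f = e then fmul (xe e) (Ee e) else fzero)"
      proof (cases "f = e")
        case True thus ?thesis by simp
      next
        case False
        have "fmul (xe f) (Ee e) = fsum (Se f) (\<lambda>t. fsmul (c t) (fmul (trm t) (Ee e)))"
          unfolding xe_def ev_def by (simp add: fmul_fsum_left fmul_fsmul_left)
        also have "\<dots> \<approx> fzero"
        proof (rule eqv_zero_fsum)
          show "finite (Se f)" using blk_fin[OF BSe] .
        next
          fix t assume tS: "t \<in> Se f"
          obtain \<mu> \<nu> where tt: "t = (u, \<mu>, w, \<nu>)" "valid (u, \<mu>, w, \<nu>)" using blk_get[OF BSe tS] .
          have "\<nu> \<noteq> []" "hd \<nu> = f" using tS tt by (auto simp: Se_def S1_def gn_def)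
          then obtain n where "\<nu> = f # n" by (cases \<nu>) auto
          hence "fmul (trm t) (Ee e) \<approx> (fzero :: ('v,'e,'k) el)"
            using T3[of u \<mu> w f n e] tt False Fe[OF eF] by simp
          hence "fsmul (c t) (fmul (trm t) (Ee e)) \<approx> (fsmul (c t) fzero :: ('v,'e,'k) el)" by (rule eqv_smul)
          thus "fsmul (c t) (fmul (trm t) (Ee e)) \<approx> fzero" by (simp add: fsmul_fzero)
        qed
        finally show ?thesis using False by simp
      qed
    qed
    also have "fsum F' (\<lambda>f. if f = e then fmul (xe e) (Ee e) else fzero) = fmul (xe e) (Ee e)"
      by (rule fsum_delta_f[OF finF eF])
    finally show ?thesis using xz eF eqv_sym eqv_trans by blast
  qed
  have Bx: "xe e \<approx> fmul (fmul (xe e) (Ee e)) (Gg e)" if eF: "e \<in> F'" for e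
  proof -
    have "xe e = fsum (Se e) (\<lambda>t. fsmul (c t) (trm t))" by (simp add: xe_def ev_def)
    also have "\<dots> \<approx> fsum (Se e) (\<lambda>t. fsmul (c t) (fmul (fmul (trm t) (Ee e)) (Gg e)))"
    proof (rule eqv_fsum[OF blk_fin[OF BSe]])
      fix t assume tS: "t \<in> Se e"
      obtain \<mu> \<nu> where tt: "t = (u, \<mu>, w, \<nu>)" "valid (u, \<mu>, w, \<nu>)" using blk_get[OF BSe tS] .
      have "\<nu> \<noteq> []" "hd \<nu> = e" using tS tt by (auto simp: Se_def S1_def gn_def)
      then obtain n where "\<nu> = e # n" by (cases \<nu>) auto
      hence "trm t \<approx> (fmul (fmul (trm t) (Ee e)) (Gg e) :: ('v,'e,'k) el)"
        using TEG[of u \<mu> w e n] tt by simp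
      thus "fsmul (c t) (trm t) \<approx> fsmul (c t) (fmul (fmul (trm t) (Ee e)) (Gg e))" by (rule eqv_smul)
    qed
    also have "\<dots> = fmul (fmul (xe e) (Ee e)) (Gg e)"
      by (simp add: xe_def ev_def fmul_fsum_left fmul_fsmul_left)
    finally show ?thesis .
  qed
  have Ex: "xe e \<approx> fsmul (-1) (fmul x0 (fmul (Ee e) (Gg e)))" if eF: "e \<in> F'" for e
  proof -
    have "fmul (xe e) (Ee e) \<approx> fsmul (-1) (fmul x0 (Ee e))" by (rule neg_lemma[OF D[OF eF]])
    hence "fmul (fmul (xe e) (Ee e)) (Gg e) \<approx> fmul (fsmul (-1) (fmul x0 (Ee e))) (Gg e)"
      using Fe[OF eF] by (intro eqv_rmul FA_Gg) auto
    also have "\<dots> = fsmul (-1) (fmul x0 (fmul (Ee e) (Gg e)))" by (simp add: fmul_fsmul_left fmul_assoc)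
    finally show ?thesis using Bx[OF eF] eqv_trans by blast
  qed
  have "ev S c \<approx> fadd x0 (fsum F' (\<lambda>e. fsmul (-1) (fmul x0 (fmul (Ee e) (Gg e)))))"
    unfolding A using Ex by (intro eqv_add eqv_refl eqv_fsum[OF finF]) auto
  also have "\<dots> = fminus x0 (fmul x0 (fsum F' (\<lambda>e. fmul (Ee e) (Gg e))))"
    by (simp only: fmul_fsum_right) (simp add: fdefs sum_negf)
  also have "\<dots> \<approx> fminus (fmul x0 (V w)) (fmul x0 (fsum F' (\<lambda>e. fmul (Ee e) (Gg e))))"
  proof (rule eqv_minus[OF _ eqv_refl])
    have "fmul x0 (V w) = fsum S0 (\<lambda>t. fsmul (c t) (fmul (trm t) (V w)))"
      by (simp add: x0_def ev_def fmul_fsum_left fmul_fsmul_left)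
    also have "\<dots> \<approx> fsum S0 (\<lambda>t. fsmul (c t) (trm t))"
    proof (rule eqv_fsum[OF blk_fin[OF BS0]])
      fix t assume tS: "t \<in> S0"
      obtain \<mu> \<nu> where tt: "t = (u, \<mu>, w, \<nu>)" "valid (u, \<mu>, w, \<nu>)" using blk_get[OF BS0 tS] .
      show "fsmul (c t) (fmul (trm t) (V w)) \<approx> fsmul (c t) (trm t)"
        using T4[OF tt(2)] tt(1) by (intro eqv_smul) simp
    qed
    also have "\<dots> = x0" by (simp add: x0_def ev_def)
    finally show "x0 \<approx> fmul x0 (V w)" by (rule eqv_sym)
  qed
  also have "\<dots> = fmul x0 (fminus (V w) (fsum F' (\<lambda>e. fmul (Ee e) (Gg e))))"
    by (simp add: fmul_fminus_right)
  finally show ?thesis unfolding x0_def S0_def .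
qed

end


context cg begin

lemma PE: assumes "walk u \<mu> w" "f \<in> E1" "s f = w"
  shows "fmul (P u \<mu>) (Ee f) \<approx> (P u (\<mu>@[f]) :: ('v,'e,'k::field) el)"
proof -
  have wf: "walk w [f] (r f)" using assms r_E0 by simp
  have "fmul (P u \<mu>) (Ee f) \<approx> (fmul (P u \<mu>) (P w [f]) :: ('v,'e,'k) el)"
    using eqv_sym[OF R3[OF assms(2)]] by (intro eqv_lmul FA_P[OF assms(1)]) simp
  also have "\<dots> \<approx> P u (\<mu>@[f])" using PP[OF assms(1) wf] .
  finally show ?thesis .
qed

lemma gfc:
  assumes B: "blk u w m S0" and N: "\<forall>t\<in>S0. gn t = []"
  shows "ev S0 c \<approx> (fsum (pm ` S0) (\<lambda>\<mu>. fsmul (c (u, \<mu>, w, [])) (P u \<mu>)) :: ('v,'e,'k::field) el)"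
    and "\<forall>\<mu>\<in>pm ` S0. walk u \<mu> w"
proof -
  have tt: "t = (u, pm t, w, [])" if "t \<in> S0" for t using blkD[OF B that] N that by simp
  have wk: "walk u (pm t) w" if "t \<in> S0" for t
  proof -
    have "valid (u, pm t, w, [])" using blkD[OF B that] tt[OF that] by metis
    thus ?thesis by auto
  qed
  show "\<forall>\<mu>\<in>pm ` S0. walk u \<mu> w" using wk by auto
  have "ev S0 c = fsum S0 (\<lambda>t. fsmul (c t) (trm t))" by (simp add: ev_def)
  also have "\<dots> \<approx> fsum S0 (\<lambda>t. fsmul (c (u, pm t, w, [])) (P u (pm t)))"
  proof (rule eqv_fsum[OF blk_fin[OF B]])
    fix t assume tS: "t \<in> S0"
    have "trm t = fmul (P u (pm t)) (V w)" using tt[OF tS] by (metis G.simps(1) trm.simps)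
    also have "\<dots> \<approx> P u (pm t)" by (rule PV[OF wk[OF tS]])
    finally show "fsmul (c t) (trm t) \<approx> fsmul (c (u, pm t, w, [])) (P u (pm t))"
      using tt[OF tS] by (metis eqv_smul)
  qed
  also have "\<dots> = fsum (pm ` S0) (\<lambda>\<mu>. fsmul (c (u, \<mu>, w, [])) (P u \<mu>))"
  proof -
    have "inj_on pm S0" by (metis inj_onI tt)
    thus ?thesis unfolding fsum_def by (simp add: sum.reindex)
  qed
  finally show "ev S0 c \<approx> (fsum (pm ` S0) (\<lambda>\<mu>. fsmul (c (u, \<mu>, w, [])) (P u \<mu>)) :: ('v,'e,'k::field) el)" .
qed

lemma gfc_zero:
  assumes B: "blk u w m S0" and N: "\<forall>t\<in>S0. gn t = []" and Z: "\<forall>\<mu>\<in>pm ` S0. c (u, \<mu>, w, []) = 0"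
  shows "ev S0 c = (fzero :: ('v,'e,'k::field) el)"
proof (rule ev_zero)
  fix t assume tS: "t \<in> S0"
  have "t = (u, pm t, w, [])" using blkD[OF B tS] N tS by simp
  thus "c t = 0" using Z tS by (metis image_eqI)
qed

end


context cgp begin

lemma phi_mul0: "x \<in> FA E0 E1 \<Longrightarrow> y \<in> FA E0 E1 \<Longrightarrow> phi x = 0 \<Longrightarrow> phi (fmul x y) = 0"
  by (simp add: phi_mul)

lemma block:
  "blk u w m S \<Longrightarrow> phi (ev S c) = 0 \<Longrightarrow> ev S c \<approx> fzero"
proof (induction m arbitrary: u w S c rule: less_induct)
  case (less m)
  note B = less.prems(1) and ph = less.prems(2)
  have fin: "finite S" using blk_fin[OF B] .
  define S0 where "S0 = {t\<in>S. gn t = []}"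
  define x0 where "x0 = ev S0 c"
  define M where "M = pm ` S0"
  define cc where "cc \<mu> = c (u, \<mu>, w, [])" for \<mu>
  define y where "y = fsum M (\<lambda>\<mu>. fsmul (cc \<mu>) (P u \<mu>))"
  have BS0: "blk u w m S0" using blk_sub[OF B] by (simp add: S0_def)
  have N0: "\<forall>t\<in>S0. gn t = []" by (simp add: S0_def)
  have x0y: "x0 \<approx> y" unfolding x0_def y_def M_def cc_def using gfc(1)[OF BS0 N0] .
  have WM: "\<forall>\<mu>\<in>M. walk u \<mu> w" unfolding M_def using gfc(2)[OF BS0 N0] .
  have finM: "finite M" using blk_fin[OF BS0] by (simp add: M_def)
  have FAx: "ev S c \<in> FA E0 E1" by (rule FA_blk[OF B])
  have FAx0: "x0 \<in> FA E0 E1" unfolding x0_def by (rule FA_blk[OF BS0])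
  have FAy: "y \<in> FA E0 E1" unfolding y_def using finM WM by (intro FA_fsum FA_fsmul FA_P) auto
  have zero0: "x0 = fzero" if "\<forall>\<mu>\<in>M. cc \<mu> = 0"
    unfolding x0_def using gfc_zero[OF BS0 N0] that by (simp add: M_def cc_def)
  show ?case
  proof (cases "S = {}")
    case True thus ?thesis by (simp add: ev_def)
  next
    case False
    then obtain t0 where t0: "t0 \<in> S" by blast
    have w0: "w \<in> E0" using blkD[OF B t0] walk_E0 by (metis valid.simps)
    show ?thesis
    proof (cases "\<forall>t\<in>S. gn t = []")
      case True
      hence "S0 = S" by (auto simp: S0_def)
      hence "phi y = 0" using ph phi_eqv[OF x0y] by (simp add: x0_def)
      hence "\<forall>\<mu>\<in>M. cc \<mu> = 0" unfolding y_def using GF[OF finM] WM by blast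
      hence "ev S c = fzero" using zero0 \<open>S0 = S\<close> by (simp add: x0_def)
      thus ?thesis by simp
    next
      case False
      then obtain t1 where t1: "t1 \<in> S" "gn t1 \<noteq> []" by blast
      have m1: "m - 1 < m" using blkD[OF B t1(1)] t1(2) by (cases "gn t1") auto
      have hdF: "hd (gn t) \<in> Fw w" if tS: "t \<in> S" and gt: "gn t \<noteq> []" for t
      proof -
        obtain \<mu> \<nu> where tt: "t = (u, \<mu>, w, \<nu>)" "valid (u, \<mu>, w, \<nu>)" using blk_get[OF B tS] .
        then obtain z where "walk w \<nu> z" by auto
        moreover have "\<nu> \<noteq> []" using gt tt by (simp add: gn_def)
        ultimately show ?thesis using tt by (cases \<nu>) (auto simp: gn_def Fw_def)
      qed
      have XE: "fmul (ev S c) (Ee e) \<approx> fzero" if eF: "e \<in> Fw w" for e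
      proof -
        have e: "e \<in> E1" "s e = w" using eF by (auto simp: Fw_def)
        obtain S' c' where S': "blk u (r e) (m - 1) S'" "fmul (ev S c) (Ee e) \<approx> ev S' c'"
          using xE[OF B e] by blast
        have "phi (fmul (ev S c) (Ee e)) = 0" using phi_mul0[OF FAx FA_Ee[OF e(1)] ph] .
        hence "phi (ev S' c') = 0" using phi_eqv[OF S'(2)] by simp
        hence "ev S' c' \<approx> fzero" using less.IH[OF m1 S'(1)] by blast
        thus ?thesis using S'(2) eqv_trans by blast
      qed
      show ?thesis
      proof (cases "w \<in> Reg E0 E1 s")
        case True
        have finF: "finite (Fw w)" using reg_fin[OF True] by simp
        have P4': "ev S c \<approx> fmul x0 (q w)"
          unfolding x0_def S0_def q_def
          by (rule P4[OF B w0 finF subset_refl]) (use hdF XE in auto)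
        show ?thesis
        proof (cases "w \<in> X")
          case True
          have "V w \<approx> fsum (Fw w) (\<lambda>e. fmul (Ee e) (Gg e))" unfolding Fw_def by (rule R7[OF True])
          hence "q w \<approx> fminus (fsum (Fw w) (\<lambda>e. fmul (Ee e) (Gg e))) (fsum (Fw w) (\<lambda>e. fmul (Ee e) (Gg e)))"
            unfolding q_def by (rule eqv_minus[OF _ eqv_refl])
          hence "q w \<approx> fzero" by (simp add: fminus_self)
          hence "fmul x0 (q w) \<approx> fmul x0 fzero" by (rule eqv_lmul[OF FAx0])
          thus ?thesis using P4' eqv_trans by (simp add: fmul_fzero_right)
        next
          case False
          have e1: "fmul x0 (q w) \<approx> fmul y (q w)" by (rule eqv_rmul[OF FA_q[OF \<open>w \<in> Reg E0 E1 s\<close>] x0y])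
          have "phi (fmul y (q w)) = phi (fmul x0 (q w))" using phi_eqv[OF e1] by simp
          also have "\<dots> = 0" using phi_eqv[OF P4'] ph by simp
          finally have ph0: "phi (fmul (fsum M (\<lambda>\<mu>. fsmul (cc \<mu>) (P u \<mu>))) (q w)) = 0" unfolding y_def .
          have "\<forall>\<mu>\<in>M. cc \<mu> = 0"
            by (rule QL[OF \<open>w \<in> Reg E0 E1 s\<close> False finM _ ph0]) (use WM in blast)
          hence "x0 = fzero" by (rule zero0)
          thus ?thesis using P4' by (simp add: fmul_fzero_left)
        qed
      next
        case False
        define F where "F = (\<lambda>t. hd (gn t)) ` {t\<in>S. gn t \<noteq> []}"
        have finF: "finite F" using fin by (simp add: F_def)
        have FF: "F \<subseteq> Fw w" using hdF by (auto simp: F_def)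
        have "F \<noteq> {}" using t1 unfolding F_def by blast
        hence "Fw w \<noteq> {}" using FF by blast
        hence infF: "infinite (Fw w)" using False w0 by (auto simp: Reg_def regular_vertex_def Fw_def)
        then obtain f where f: "f \<in> Fw w" "f \<notin> F"
          using finF by (metis Diff_iff ex_in_conv finite_Diff2 finite.emptyI)
        have fe: "f \<in> E1" "s f = w" using f(1) by (auto simp: Fw_def)
        have P4': "ev S c \<approx> fmul x0 (fminus (V w) (fsum F (\<lambda>e. fmul (Ee e) (Gg e))))"
          unfolding x0_def S0_def
          by (rule P4[OF B w0 finF FF]) (use hdF XE FF in \<open>auto simp: F_def\<close>)
        have "fmul x0 (Ee f) \<approx> fzero"
        proof -
          define S1 where "S1 = {t\<in>S. \<not> gn t = []}"
          have BS1: "blk u w m S1" using blk_sub[OF B] by (simp add: S1_def)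
          have eq1: "fmul (ev S c) (Ee f) = fadd (fmul x0 (Ee f)) (fmul (ev S1 c) (Ee f))"
            unfolding x0_def S0_def S1_def by (subst ev_split[OF fin]) (simp add: fmul_fadd_left)
          have "fmul (ev S1 c) (Ee f) = fsum S1 (\<lambda>t. fsmul (c t) (fmul (trm t) (Ee f)))"
            by (simp add: ev_def fmul_fsum_left fmul_fsmul_left)
          also have "\<dots> \<approx> fzero"
          proof (rule eqv_zero_fsum[OF blk_fin[OF BS1]])
            fix t assume tS: "t \<in> S1"
            obtain \<mu> \<nu> where tt: "t = (u, \<mu>, w, \<nu>)" "valid (u, \<mu>, w, \<nu>)" using blk_get[OF BS1 tS] .
            have ne: "\<nu> \<noteq> []" using tS tt by (simp add: S1_def gn_def)
            then obtain g n where gn: "\<nu> = g # n" by (cases \<nu>) auto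
            have "g \<in> F" using tS tt gn by (force simp: S1_def F_def gn_def)
            hence "g \<noteq> f" using f(2) by blast
            hence "fmul (trm t) (Ee f) \<approx> fzero" using T3[of u \<mu> w g n f] tt gn fe by simp
            hence "fsmul (c t) (fmul (trm t) (Ee f)) \<approx> fsmul (c t) fzero" by (rule eqv_smul)
            thus "fsmul (c t) (fmul (trm t) (Ee f)) \<approx> fzero" by (simp add: fsmul_fzero)
          qed
          finally have "fmul (ev S c) (Ee f) \<approx> fadd (fmul x0 (Ee f)) fzero"
            unfolding eq1 by (rule eqv_add[OF eqv_refl])
          hence "fmul x0 (Ee f) \<approx> fmul (ev S c) (Ee f)" by (simp add: fdefs eqv_sym)
          thus ?thesis using XE[OF f(1)] eqv_trans by blast
        qed
        hence "fmul y (Ee f) \<approx> fzero"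
          by (rule eqv_trans[OF eqv_sym[OF eqv_rmul[OF FA_Ee[OF fe(1)] x0y]]])
        moreover have "fmul y (Ee f) \<approx> fsum ((\<lambda>\<mu>. \<mu>@[f]) ` M) (\<lambda>\<mu>. fsmul (cc (butlast \<mu>)) (P u \<mu>))"
        proof -
          have "fmul y (Ee f) = fsum M (\<lambda>\<mu>. fsmul (cc \<mu>) (fmul (P u \<mu>) (Ee f)))"
            by (simp add: y_def fmul_fsum_left fmul_fsmul_left)
          also have "\<dots> \<approx> fsum M (\<lambda>\<mu>. fsmul (cc \<mu>) (P u (\<mu>@[f])))"
            using WM fe by (intro eqv_fsum[OF finM] eqv_smul PE) auto
          also have "\<dots> = fsum ((\<lambda>\<mu>. \<mu>@[f]) ` M) (\<lambda>\<mu>. fsmul (cc (butlast \<mu>)) (P u \<mu>))"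
            unfolding fsum_def by (simp add: sum.reindex inj_on_def)
          finally show ?thesis .
        qed
        ultimately have ph1: "phi (fsum ((\<lambda>\<mu>. \<mu>@[f]) ` M) (\<lambda>\<mu>. fsmul (cc (butlast \<mu>)) (P u \<mu>))) = 0"
          by (intro phi_eqv0) (rule eqv_trans[OF eqv_sym])
        have wf: "\<And>\<mu>. \<mu> \<in> (\<lambda>\<mu>. \<mu>@[f]) ` M \<Longrightarrow> walk u \<mu> (r f)" using WM fe r_E0 by (auto simp: walk_append)
        have "\<forall>\<mu>\<in>(\<lambda>\<mu>. \<mu>@[f]) ` M. cc (butlast \<mu>) = 0"
          by (rule GF[OF finite_imageI[OF finM] wf ph1])
        hence "\<forall>\<mu>\<in>M. cc \<mu> = 0" by auto
        hence "x0 = fzero" by (rule zero0)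
        thus ?thesis using P4' by (simp add: fmul_fzero_left)
      qed
    qed
  qed
qed

end


context cgp begin

lemma term_proj:
  assumes vt: "valid t" and u0: "u \<in> E0" and w0: "w \<in> E0"
  shows "fmul (V u) (fmul (trm t) (V w)) \<approx> (if fst t = u \<and> fst (snd (snd t)) = w then trm t else fzero)"
proof -
  obtain u' \<mu> w' \<nu> where tt: "t = (u', \<mu>, w', \<nu>)" by (cases t) auto
  have v: "valid (u', \<mu>, w', \<nu>)" using vt tt by simp
  have "fmul (trm t) (V w) \<approx> (if w' = w then trm t else fzero)"
    using T4[OF v] T4'[OF v w0] tt by auto
  hence "fmul (V u) (fmul (trm t) (V w)) \<approx> fmul (V u) (if w' = w then trm t else fzero)"
    by (rule eqv_lmul[OF FA_V[OF u0]])
  also have "\<dots> \<approx> (if u' = u \<and> w' = w then trm t else fzero)"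
  proof (cases "w' = w")
    case True
    thus ?thesis using T5[OF v] T5'[OF v u0] tt by auto
  next
    case False
    thus ?thesis by (simp add: fmul_fzero_right)
  qed
  finally show ?thesis using tt by simp
qed

lemma main_zero:
  assumes a: "a \<in> FA E0 E1" and pa: "phi a = 0"
  shows "a \<approx> fzero"
proof -
  obtain S c where S: "finite S" "\<forall>t\<in>S. valid t" "a \<approx> ev S c" using span_FA[OF a] by blast
  define x where "x = ev S c"
  have FAx: "x \<in> FA E0 E1" unfolding x_def using S by (intro FA_ev) auto
  have px: "phi x = 0" using pa phi_eqv[OF S(3)] by (simp add: x_def)
  define \<kappa> where "\<kappa> t = (fst t, fst (snd (snd t)))" for t :: "'v \<times> 'e list \<times> 'v \<times> 'e list"
  define m where "m = Max ((\<lambda>t. length (gn t)) ` S)"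
  have x_eq: "x = fsum (\<kappa> ` S) (\<lambda>p. ev {t\<in>S. \<kappa> t = p} c)"
    unfolding x_def ev_def fsum_def
    by (rule ext) (simp add: sum.image_gen[OF S(1), of _ \<kappa>])
  have "fsum (\<kappa> ` S) (\<lambda>p. ev {t\<in>S. \<kappa> t = p} c) \<approx> fsum (\<kappa> ` S) (\<lambda>p. fzero)"
  proof (rule eqv_fsum)
    show "finite (\<kappa> ` S)" using S(1) by simp
  next
    fix p assume pB: "p \<in> \<kappa> ` S"
    then obtain t0 where t0: "t0 \<in> S" "p = \<kappa> t0" by blast
    obtain u w where p: "p = (u, w)" by (cases p) auto
    obtain u' \<mu> w' \<nu> where tt: "t0 = (u', \<mu>, w', \<nu>)" by (cases t0) auto
    have "u = u'" "w = w'" using t0 tt p by (auto simp: \<kappa>_def)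
    moreover have "valid (u', \<mu>, w', \<nu>)" using S(2) t0 tt by auto
    ultimately obtain z where "walk u \<mu> z" "walk w \<nu> z" by auto
    hence u0: "u \<in> E0" and w0: "w \<in> E0" using walk_E0 by auto
    define Sb where "Sb = {t\<in>S. \<kappa> t = p}"
    have B: "blk u w m Sb"
      unfolding blk_def
    proof (rule conjI[OF _ ballI])
      show "finite Sb" using S(1) by (simp add: Sb_def)
    next
      fix t assume "t \<in> Sb"
      hence tS: "t \<in> S" and kt: "\<kappa> t = (u, w)" by (auto simp: Sb_def p)
      have "length (gn t) \<le> m" unfolding m_def using S(1) tS by (intro Max_ge) auto
      thus "valid t \<and> fst t = u \<and> fst (snd (snd t)) = w \<and> length (gn t) \<le> m"
        using S(2) tS kt by (simp add: \<kappa>_def)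
    qed
    have "fmul (V u) (fmul x (V w)) = fsum S (\<lambda>t. fsmul (c t) (fmul (V u) (fmul (trm t) (V w))))"
      by (simp add: x_def ev_def fmul_fsum_left fmul_fsum_right fmul_fsmul_left fmul_fsmul_right)
    also have "\<dots> \<approx> fsum S (\<lambda>t. if \<kappa> t = p then fsmul (c t) (trm t) else fzero)"
    proof (rule eqv_fsum[OF S(1)])
      fix t assume tS: "t \<in> S"
      have "fsmul (c t) (fmul (V u) (fmul (trm t) (V w))) \<approx> fsmul (c t) (if fst t = u \<and> fst (snd (snd t)) = w then trm t else fzero)"
        by (rule eqv_smul[OF term_proj[OF _ u0 w0]]) (use S(2) tS in blast)
      thus "fsmul (c t) (fmul (V u) (fmul (trm t) (V w))) \<approx> (if \<kappa> t = p then fsmul (c t) (trm t) else fzero)"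
        by (cases "fst t = u \<and> fst (snd (snd t)) = w") (auto simp: \<kappa>_def p fsmul_fzero)
    qed
    also have "\<dots> = ev Sb c" unfolding Sb_def ev_def by (rule fsum_filter_if[OF S(1)])
    finally have e: "fmul (V u) (fmul x (V w)) \<approx> ev Sb c" .
    have "phi (fmul (V u) (fmul x (V w))) = 0"
      using phi_mul[OF FA_V[OF u0] FA_fmul[OF FAx FA_V[OF w0]]] phi_mul[OF FAx FA_V[OF w0]] px by simp
    hence "phi (ev Sb c) = 0" using phi_eqv[OF e] by simp
    hence "ev Sb c \<approx> fzero" by (rule block[OF B])
    thus "ev {t\<in>S. \<kappa> t = p} c \<approx> fzero" by (simp add: Sb_def)
  qed
  hence "x \<approx> fzero" unfolding x_eq by (simp add: fsum_fzero)
  thus ?thesis using S(3) eqv_trans by (simp add: x_def)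
qed

lemma inj: "inj_on \<pi> (CohnAlg E0 E1 r s X)"
proof (rule inj_onI)
  fix x y assume "x \<in> CohnAlg E0 E1 r s X" "y \<in> CohnAlg E0 E1 r s X" and eq: "\<pi> x = \<pi> y"
  then obtain a b where a: "a \<in> FA E0 E1" "x = cls E0 E1 r s X a" and b: "b \<in> FA E0 E1" "y = cls E0 E1 r s X b"
    unfolding CohnAlg_def by blast
  have FAb': "fsmul (-1) b \<in> FA E0 E1" using FA_fsmul[OF b(1)] .
  have "phi (fadd b (fsmul (-1) b)) = phi b + phi (fsmul (-1) b)" by (rule phi_add[OF b(1) FAb'])
  moreover have "fadd b (fsmul (-1) b) = fzero" by (simp add: fdefs)
  ultimately have nb: "phi (fsmul (-1) b) = - phi b" using phi_zero by (simp add: eq_neg_iff_add_eq_0 add.commute)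
  have "phi (fminus a b) = phi a + phi (fsmul (-1) b)" unfolding fminus_eq by (rule phi_add[OF a(1) FAb'])
  also have "\<dots> = 0" using nb eq a b by (simp add: phi_def)
  finally have "fminus a b \<approx> fzero" by (intro main_zero FA_fminus a(1) b(1))
  hence "a \<approx> b" by (simp add: eqv_def fminus_fzero)
  thus "x = y" using a b cls_eq by simp
qed

end

theorem mainTheorem5:
  fixes E0 :: "'v set" and E1 :: "'e set" and r s :: "'e \<Rightarrow> 'v"
    and X :: "'v set"
    and \<pi> :: "(('v, 'e) gen list \<Rightarrow> 'k::field) set \<Rightarrow> 'a::ring"
  assumes "graph E0 E1 r s"
    and "condition_L E1 r s"
    and "X \<subseteq> Reg E0 E1 s"
    and "cohn_ring_hom E0 E1 r s X \<pi>"
    and "\<forall>u \<in> E0. \<pi> (cls E0 E1 r s X (fgen (Vx u))) \<noteq> 0"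
    and "\<forall>v \<in> Reg E0 E1 s - X. \<pi> (cls E0 E1 r s X (gap_elem E1 s v)) \<noteq> 0"
  shows "inj_on \<pi> (CohnAlg E0 E1 r s X)"
proof -
  interpret cgp E0 E1 r s X \<pi>
    by (unfold_locales) (use assms in auto)
  show ?thesis by (rule inj)
qed


end
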